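(* Let $D\ge 2$ be an even integer and let $\mathcal{S}=\{\mathcal{S}(0),\ldots,\mathcal{S}(D-1)\}$ be the $D$-PSK constellation with $\mathcal{S}(\ell)=\exp\!\left(j\pi\frac{2\ell+1}{D}\right)$. Let $P>0$, $\sigma_g^2>0$, $N_0>0$, and let $g\sim\mathcal{CN}(0,\sigma_g^2)$, $n_1\sim\mathcal{CN}(0,N_0)$, $n_t\sim\mathcal{CN}(0,N_0)$ and $s_t$ (uniformly distributed on $\mathcal{S}$) be mutually independent. Define $$\tilde{s}_t=\frac{\sqrt{P}\,g\,s_t+n_t}{\sqrt{P}\,g+n_1},\qquad \hat{s}_t=\arg\min_{s\in\mathcal{S}}|s-\tilde{s}_t|^2,\qquad \xi_t=1-s_t\hat{s}_t^*,$$ and for $d=0,\ldots,D-1$ let $p_d=\mathbb{P}[\hat{s}_t=\mathcal{S}(d)\mid s_t=\mathcal{S}(0)]$. Then, with $\mu_\xi=\mathbb{E}[\xi_t]$, $\mu_{\xi^2}=\mathbb{E}[\xi_t^2]$ and $\mu_{|\xi|^2}=\mathbb{E}[|\xi_t|^2]$, $$\mu_\xi = 1 - p_{0} + p_{D/2} - 2\sum_{d=1}^{D/2-1}p_{d}\cos\!\left(\frac{2\pi d}{D}\right),$$ $$\mu_{\xi^2} = 1 - p_{0} + 3p_{D/2} + 2\sum_{d=1}^{D/2 - 1}p_{d} \left[\cos\!\left(\frac{4\pi d}{D}\right) - 2\cos\!\left(\frac{2\pi d}{D}\right)\right],$$ $$\mu_{|\xi|^2} = 4p_{D/2} + 4\sum_{d=1}^{D/2-1}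 p_{d} \left[1-\cos \!\left(\frac{2\pi d}{D}\right)\right].$$
   Context: $\mathcal{CN}(0,\sigma^2)$ denotes a circularly-symmetric complex Gaussian random variable with variance $\sigma^2$; $j$ is the imaginary unit and $(\cdot)^*$ denotes complex conjugation. This models a single sensing RIS element that estimates its channel $g$ from one pilot symbol (estimate $(\sqrt{P}g+n_1)/\sqrt{P}$) and then equalizes and detects a data symbol $s_t$ by nearest-symbol decision; $p_d$ is the probability of deciding $\mathcal{S}(d)$ when $\mathcal{S}(0)$ was sent. *)

theory Defs
  imports "HOL-Probability.Probability"
begin

definition psk :: "nat \<Rightarrow> nat \<Rightarrow> complex" where
  "psk D l = exp (\<i> * complex_of_real (pi * (2 * real l + 1) / real D))"

definition psk_set :: "nat \<Rightarrow> complex set" where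
  "psk_set D = psk D ` {0..<D}"

definition psk_detect :: "nat \<Rightarrow> complex \<Rightarrow> complex" where
  "psk_detect D z = (ARG_MIN (\<lambda>s. (cmod (s - z))^2) s. s \<in> psk_set D)"

definition cgauss_density :: "real \<Rightarrow> complex \<Rightarrow> real" where
  "cgauss_density v z = exp (- ((cmod z)^2) / v) / (pi * v)"

definition equalized :: "real \<Rightarrow> complex \<Rightarrow> complex \<Rightarrow> complex \<Rightarrow> complex \<Rightarrow> complex" where
  "equalized P gv sv n1v ntv =
     (complex_of_real (sqrt P) * gv * sv + ntv) / (complex_of_real (sqrt P) * gv + n1v)"

end

theory Submission
  imports Defs
begin

lemma Complex_pair_measurable[measurable]:
  "(\<lambda>(x,y). Complex x y) \<in> borel_measurable (borel \<Otimes>\<^sub>M borel :: (real \<times> real) measure)"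
  unfolding Complex_eq case_prod_beta by measurable

lemma lborel_complex:
  "distr (lborel \<Otimes>\<^sub>M lborel) borel (\<lambda>(x,y). Complex x y) = (lborel :: complex measure)"
proof (rule lborel_eqI[symmetric])
  fix l u :: complex assume lu: "\<And>b. b \<in> Basis \<Longrightarrow> l \<bullet> b \<le> u \<bullet> b"
  have le: "Re l \<le> Re u" "Im l \<le> Im u" using lu[of 1] lu[of "\<i>"] by (auto simp: Basis_complex_def)
  have meas: "(\<lambda>(x,y). Complex x y) \<in> (lborel \<Otimes>\<^sub>M lborel) \<rightarrow>\<^sub>M (borel :: complex measure)"
    by (simp add: measurable_cong_sets[OF sets_pair_measure_cong[OF sets_lborel sets_lborel] refl])
  have pre: "(\<lambda>(x,y). Complex x y) -` box l u \<inter> space (lborel \<Otimes>\<^sub>M lborel) = box (Re l) (Re u) \<times> box (Im l) (Im u)"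
    by (auto simp: box_def Basis_complex_def space_pair_measure)
  show "emeasure (distr (lborel \<Otimes>\<^sub>M lborel) borel (\<lambda>(x,y). Complex x y)) (box l u) = (\<Prod>b\<in>Basis. (u - l) \<bullet> b)"
    using le by (simp add: emeasure_distr[OF meas] pre lborel.emeasure_pair_measure_Times Basis_complex_def ennreal_mult)
qed simp

lemma emeasure_lborel_translate:
  assumes "B \<in> sets borel"
  shows "emeasure lborel ((\<lambda>x. x + c) -` B) = emeasure lborel (B::real set)"
proof -
  have "emeasure lborel B = emeasure (distr lborel borel ((+) c)) B" by (simp add: lborel_distr_plus)
  also have "\<dots> = emeasure lborel ((+) c -` B \<inter> space lborel)"
    using assms by (intro emeasure_distr) auto
  moreover have "(\<lambda>x. x + c) = (+) c" by (auto simp: fun_eq_iff)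
  ultimately show ?thesis by simp
qed

lemma shear1:
  "distr (lborel \<Otimes>\<^sub>M lborel) (lborel \<Otimes>\<^sub>M lborel) (\<lambda>(x,y). (x + t*y, y)) = (lborel \<Otimes>\<^sub>M lborel :: (real\<times>real) measure)"
proof (rule measure_eqI)
  fix A assume "A \<in> sets (distr (lborel \<Otimes>\<^sub>M lborel) (lborel \<Otimes>\<^sub>M lborel) (\<lambda>(x,y). (x + t*y, y)))"
  then have A: "A \<in> sets (lborel \<Otimes>\<^sub>M lborel)" by simp
  have f: "(\<lambda>(x,y). (x + t*y, y)) \<in> (lborel \<Otimes>\<^sub>M lborel) \<rightarrow>\<^sub>M (lborel \<Otimes>\<^sub>M lborel :: (real\<times>real) measure)"
    by measurable
  have pre: "(\<lambda>(x,y). (x + t*y, y)) -` A \<inter> space (lborel \<Otimes>\<^sub>M lborel) \<in> sets (lborel \<Otimes>\<^sub>M lborel)"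
    using f A by (rule measurable_sets)
  have "emeasure (distr (lborel \<Otimes>\<^sub>M lborel) (lborel \<Otimes>\<^sub>M lborel) (\<lambda>(x,y). (x + t*y, y))) A
     = emeasure (lborel \<Otimes>\<^sub>M lborel) ((\<lambda>(x,y). (x + t*y, y)) -` A \<inter> space (lborel \<Otimes>\<^sub>M lborel))"
    using f A by (rule emeasure_distr)
  also have "\<dots> = (\<integral>\<^sup>+y. emeasure lborel ((\<lambda>x. (x, y)) -` ((\<lambda>(x,y). (x + t*y, y)) -` A \<inter> space (lborel \<Otimes>\<^sub>M lborel))) \<partial>lborel)"
    using pre by (rule lborel_pair.emeasure_pair_measure_alt2)
  also have "\<dots> = (\<integral>\<^sup>+y. emeasure lborel ((\<lambda>x. (x, y)) -` A) \<partial>lborel)"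
  proof (rule nn_integral_cong)
    fix y :: real
    have "(\<lambda>x. (x, y)) -` ((\<lambda>(x,y). (x + t*y, y)) -` A \<inter> space (lborel \<Otimes>\<^sub>M lborel))
        = (\<lambda>x. x + t*y) -` ((\<lambda>x. (x, y)) -` A)"
      by (auto simp: space_pair_measure)
    moreover have "(\<lambda>x. (x, y)) -` A \<in> sets borel"
      using sets_Pair2[OF A] by simp
    ultimately show "emeasure lborel ((\<lambda>x. (x, y)) -` ((\<lambda>(x,y). (x + t*y, y)) -` A \<inter> space (lborel \<Otimes>\<^sub>M lborel)))
        = emeasure lborel ((\<lambda>x. (x, y)) -` A)"
      by (simp add: emeasure_lborel_translate)
  qed
  also have "\<dots> = emeasure (lborel \<Otimes>\<^sub>M lborel) A"
    using A by (rule lborel_pair.emeasure_pair_measure_alt2[symmetric])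
  finally show "emeasure (distr (lborel \<Otimes>\<^sub>M lborel) (lborel \<Otimes>\<^sub>M lborel) (\<lambda>(x,y). (x + t*y, y))) A = emeasure (lborel \<Otimes>\<^sub>M lborel) A" .
qed simp

lemma shear2:
  "distr (lborel \<Otimes>\<^sub>M lborel) (lborel \<Otimes>\<^sub>M lborel) (\<lambda>(x,y). (x, y + t*x)) = (lborel \<Otimes>\<^sub>M lborel :: (real\<times>real) measure)"
proof (rule measure_eqI)
  fix A assume "A \<in> sets (distr (lborel \<Otimes>\<^sub>M lborel) (lborel \<Otimes>\<^sub>M lborel) (\<lambda>(x,y). (x, y + t*x)))"
  then have A: "A \<in> sets (lborel \<Otimes>\<^sub>M lborel)" by simp
  have f: "(\<lambda>(x,y). (x, y + t*x)) \<in> (lborel \<Otimes>\<^sub>M lborel) \<rightarrow>\<^sub>M (lborel \<Otimes>\<^sub>M lborel :: (real\<times>real) measure)"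
    by measurable
  have pre: "(\<lambda>(x,y). (x, y + t*x)) -` A \<inter> space (lborel \<Otimes>\<^sub>M lborel) \<in> sets (lborel \<Otimes>\<^sub>M lborel)"
    using f A by (rule measurable_sets)
  have "emeasure (distr (lborel \<Otimes>\<^sub>M lborel) (lborel \<Otimes>\<^sub>M lborel) (\<lambda>(x,y). (x, y + t*x))) A
     = emeasure (lborel \<Otimes>\<^sub>M lborel) ((\<lambda>(x,y). (x, y + t*x)) -` A \<inter> space (lborel \<Otimes>\<^sub>M lborel))"
    using f A by (rule emeasure_distr)
  also have "\<dots> = (\<integral>\<^sup>+x. emeasure lborel (Pair x -` ((\<lambda>(x,y). (x, y + t*x)) -` A \<inter> space (lborel \<Otimes>\<^sub>M lborel))) \<partial>lborel)"
    using pre by (rule lborel.emeasure_pair_measure_alt)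
  also have "\<dots> = (\<integral>\<^sup>+x. emeasure lborel (Pair x -` A) \<partial>lborel)"
  proof (rule nn_integral_cong)
    fix x :: real
    have "Pair x -` ((\<lambda>(x,y). (x, y + t*x)) -` A \<inter> space (lborel \<Otimes>\<^sub>M lborel))
        = (\<lambda>y. y + t*x) -` (Pair x -` A)"
      by (auto simp: space_pair_measure)
    moreover have "Pair x -` A \<in> sets borel"
      using sets_Pair1[OF A] by simp
    ultimately show "emeasure lborel (Pair x -` ((\<lambda>(x,y). (x, y + t*x)) -` A \<inter> space (lborel \<Otimes>\<^sub>M lborel)))
        = emeasure lborel (Pair x -` A)"
      by (simp add: emeasure_lborel_translate)
  qed
  also have "\<dots> = emeasure (lborel \<Otimes>\<^sub>M lborel) A"
    using A by (rule lborel.emeasure_pair_measure_alt[symmetric])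
  finally show "emeasure (distr (lborel \<Otimes>\<^sub>M lborel) (lborel \<Otimes>\<^sub>M lborel) (\<lambda>(x,y). (x, y + t*x))) A = emeasure (lborel \<Otimes>\<^sub>M lborel) A" .
qed simp



definition rot2 :: "real \<Rightarrow> real \<Rightarrow> real \<times> real \<Rightarrow> real \<times> real" where
  "rot2 c s = (\<lambda>(x,y). (c*x - s*y, s*x + c*y))"

lemma rot2_measurable[measurable]: "rot2 c s \<in> (lborel \<Otimes>\<^sub>M lborel) \<rightarrow>\<^sub>M (lborel \<Otimes>\<^sub>M lborel)"
  unfolding rot2_def by measurable

lemma shearX_meas: "(\<lambda>(x::real,y::real). (x + a*y, y)) \<in> (lborel \<Otimes>\<^sub>M lborel) \<rightarrow>\<^sub>M (lborel \<Otimes>\<^sub>M lborel)"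
  by measurable
lemma shearY_meas: "(\<lambda>(x::real,y::real). (x, y + a*x)) \<in> (lborel \<Otimes>\<^sub>M lborel) \<rightarrow>\<^sub>M (lborel \<Otimes>\<^sub>M lborel)"
  by measurable

lemma rot2_inv_nz:
  assumes cs: "c^2 + s^2 = 1" and s: "s \<noteq> 0"
  shows "distr (lborel \<Otimes>\<^sub>M lborel) (lborel \<Otimes>\<^sub>M lborel) (rot2 c s) = (lborel \<Otimes>\<^sub>M lborel :: (real\<times>real) measure)"
proof -
  define a where "a = (c - 1) / s"
  define X where "X = (\<lambda>(x::real,y::real). (x + a*y, y))"
  define Y where "Y = (\<lambda>(x::real,y::real). (x, y + s*x))"
  let ?L = "lborel \<Otimes>\<^sub>M lborel :: (real\<times>real) measure"
  have Xm: "X \<in> ?L \<rightarrow>\<^sub>M ?L" unfolding X_def by (rule shearX_meas)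
  have Ym: "Y \<in> ?L \<rightarrow>\<^sub>M ?L" unfolding Y_def by (rule shearY_meas)
  have 1: "1 + a * s = c" using s by (simp add: a_def field_simps)
  have 2: "2*a + a*a * s = -s"
  proof -
    have "2*a + a*a * s = a*(1 + (1 + a * s))" by (simp add: algebra_simps)
    also have "\<dots> = a*(1 + c)" by (simp only: 1)
    also have "\<dots> = (c*c - 1)/s" by (simp add: a_def field_simps)
    also have "\<dots> = -s" using cs s by (simp add: field_simps power2_eq_square)
    finally show ?thesis .
  qed
  have eq: "rot2 c s = X \<circ> (Y \<circ> X)"
  proof
    fix p :: "real \<times> real"
    obtain x y where p: "p = (x,y)" by (cases p)
    have "(X \<circ> (Y \<circ> X)) p = (x*(1 + a * s) + y*(2*a + a*a * s), s*x + y*(1 + a * s))"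
      unfolding p X_def Y_def by (simp add: algebra_simps)
    also have "\<dots> = (c*x - s*y, s*x + c*y)" unfolding 1 2 by simp
    finally show "rot2 c s p = (X \<circ> (Y \<circ> X)) p" by (simp add: p rot2_def)
  qed
  have dX: "distr ?L ?L X = ?L" unfolding X_def by (rule shear1)
  have dY: "distr ?L ?L Y = ?L" unfolding Y_def by (rule shear2)
  have "distr ?L ?L (X \<circ> (Y \<circ> X)) = distr (distr ?L ?L (Y \<circ> X)) ?L X"
    by (rule distr_distr[symmetric]) (auto intro: Xm Ym measurable_comp)
  also have "distr ?L ?L (Y \<circ> X) = distr (distr ?L ?L X) ?L Y"
    by (rule distr_distr[symmetric]) (auto intro: Xm Ym)
  finally show ?thesis by (simp only: eq dX dY)
qed

lemma rot2_inv:
  assumes cs: "c^2 + s^2 = 1"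
  shows "distr (lborel \<Otimes>\<^sub>M lborel) (lborel \<Otimes>\<^sub>M lborel) (rot2 c s) = (lborel \<Otimes>\<^sub>M lborel :: (real\<times>real) measure)"
proof (cases "s = 0")
  case False then show ?thesis using rot2_inv_nz cs by blast
next
  case True
  let ?L = "lborel \<Otimes>\<^sub>M lborel :: (real\<times>real) measure"
  from True cs have "c = 1 \<or> c = -1" by (simp add: power2_eq_1_iff)
  then show ?thesis
  proof
    assume "c = 1" then have "rot2 c s = (\<lambda>x. x)" using True by (auto simp: rot2_def fun_eq_iff)
    then show ?thesis by simp
  next
    assume "c = -1" then have e: "rot2 c s = rot2 0 1 \<circ> rot2 0 1" using True by (auto simp: rot2_def fun_eq_iff)
    have "distr ?L ?L (rot2 0 1 \<circ> rot2 0 1) = distr (distr ?L ?L (rot2 0 1)) ?L (rot2 0 1)"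
      by (rule distr_distr[symmetric]) (auto intro: rot2_measurable)
    also have "\<dots> = ?L" using rot2_inv_nz[of 0 1] by simp
    finally show ?thesis by (simp only: e)
  qed
qed

lemma Complex_L2_measurable:
  "(\<lambda>(x,y). Complex x y) \<in> (lborel \<Otimes>\<^sub>M lborel) \<rightarrow>\<^sub>M (borel :: complex measure)"
  by (simp add: measurable_cong_sets[OF sets_pair_measure_cong[OF sets_lborel sets_lborel] refl])

lemma lborel_complex_rot:
  assumes u: "cmod u = 1"
  shows "distr lborel borel (\<lambda>z. u * z) = (lborel :: complex measure)"
proof -
  let ?L = "lborel \<Otimes>\<^sub>M lborel :: (real\<times>real) measure"
  define C where "C = (\<lambda>(x,y). Complex x y)"
  have Cm: "C \<in> ?L \<rightarrow>\<^sub>M borel" unfolding C_def by (rule Complex_L2_measurable)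
  have um: "(\<lambda>z. u * z) \<in> (borel :: complex measure) \<rightarrow>\<^sub>M borel" by measurable
  have cs: "(Re u)^2 + (Im u)^2 = 1" using u by (simp add: cmod_def)
  have eq: "(\<lambda>z. u * z) \<circ> C = C \<circ> rot2 (Re u) (Im u)"
    by (auto simp: fun_eq_iff rot2_def complex_eq_iff C_def)
  have "distr lborel borel (\<lambda>z. u * z) = distr (distr ?L borel C) borel (\<lambda>z. u * z)"
    by (simp add: lborel_complex C_def)
  also have "\<dots> = distr ?L borel ((\<lambda>z. u * z) \<circ> C)"
    by (rule distr_distr) (auto intro: um Cm)
  also have "\<dots> = distr ?L borel (C \<circ> rot2 (Re u) (Im u))" by (simp only: eq)
  also have "\<dots> = distr (distr ?L ?L (rot2 (Re u) (Im u))) borel C"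
    by (rule distr_distr[symmetric]) (auto intro: Cm rot2_measurable)
  also have "\<dots> = lborel" by (simp add: rot2_inv[OF cs] lborel_complex C_def)
  finally show ?thesis .
qed

lemma lborel_complex_cnj:
  "distr lborel borel cnj = (lborel :: complex measure)"
proof -
  let ?L = "lborel \<Otimes>\<^sub>M lborel :: (real\<times>real) measure"
  define C where "C = (\<lambda>(x,y). Complex x y)"
  define R where "R = (\<lambda>(x::real,y::real). (x, -y))"
  have Cm: "C \<in> ?L \<rightarrow>\<^sub>M borel" unfolding C_def by (rule Complex_L2_measurable)
  have cm: "cnj \<in> (borel :: complex measure) \<rightarrow>\<^sub>M borel"
    using borel_measurable_continuous_onI[of cnj] continuous_on_cnj[OF continuous_on_id] by simp
  have Rm: "R \<in> ?L \<rightarrow>\<^sub>M ?L" unfolding R_def by measurable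
  have eq: "cnj \<circ> C = C \<circ> R"
    by (auto simp: fun_eq_iff complex_eq_iff C_def R_def)
  have RL: "distr ?L ?L R = ?L"
  proof -
    have "distr lborel borel (\<lambda>x. x) \<Otimes>\<^sub>M distr lborel borel uminus = distr ?L (borel \<Otimes>\<^sub>M borel) (\<lambda>(x, y). (x, - (y::real)))"
      by (intro pair_measure_distr) (auto simp: lborel_distr_uminus intro: lborel.sigma_finite_measure_axioms)
    also have "\<dots> = distr ?L ?L R"
      by (intro distr_cong) (auto simp: R_def)
    finally show ?thesis by (simp add: lborel_distr_uminus distr_id2[of borel lborel, simplified])
  qed
  have "distr lborel borel cnj = distr (distr ?L borel C) borel cnj"
    by (simp add: lborel_complex C_def)
  also have "\<dots> = distr ?L borel (cnj \<circ> C)"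
    by (rule distr_distr) (auto intro: cm Cm)
  also have "\<dots> = distr ?L borel (C \<circ> R)" by (simp only: eq)
  also have "\<dots> = distr (distr ?L ?L R) borel C"
    by (rule distr_distr[symmetric]) (auto intro: Cm Rm)
  also have "\<dots> = lborel" by (simp add: RL lborel_complex C_def)
  finally show ?thesis .
qed

lemma cnj_measurable[measurable]: "cnj \<in> (borel :: complex measure) \<rightarrow>\<^sub>M borel"
  using borel_measurable_continuous_onI[of cnj] continuous_on_cnj[OF continuous_on_id] by simp

lemma cgauss_measurable[measurable]: "cgauss_density v \<in> borel_measurable borel"
  unfolding cgauss_density_def by measurable

definition cg :: "real \<Rightarrow> complex measure" where
  "cg v = density lborel (\<lambda>z. ennreal (cgauss_density v z))"

lemma sets_cg[simp]: "sets (cg v) = sets borel"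
  by (simp add: cg_def)

lemma space_cg[simp]: "space (cg v) = UNIV"
  by (simp add: cg_def)

lemma cg_inv:
  assumes phi: "phi \<in> borel \<rightarrow>\<^sub>M borel" "distr lborel borel phi = lborel" "\<And>z. cmod (phi z) = cmod z"
  shows "distr (cg v) borel phi = cg v"
proof (rule measure_eqI)
  show "sets (distr (cg v) borel phi) = sets (cg v)" by simp
  fix A assume "A \<in> sets (distr (cg v) borel phi)"
  then have A: "A \<in> sets borel" by (simp only: sets_distr)
  note A[measurable]
  have "measurable (cg v) borel = measurable borel (borel :: complex measure)"
    by (rule measurable_cong_sets) simp_all
  with phi(1) have phi': "phi \<in> cg v \<rightarrow>\<^sub>M borel" by simp
  have "measurable lborel borel = measurable borel (borel :: complex measure)"
    by (rule measurable_cong_sets) simp_all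
  with phi(1) have phiL: "phi \<in> lborel \<rightarrow>\<^sub>M borel" by simp
  have pre: "phi -` A \<in> sets lborel" using measurable_sets[OF phi(1) A] by simp
  have "emeasure (distr (cg v) borel phi) A = emeasure (cg v) (phi -` A \<inter> space (cg v))"
    by (rule emeasure_distr[OF phi' A])
  also have "\<dots> = (\<integral>\<^sup>+z. ennreal (cgauss_density v z) * indicator (phi -` A) z \<partial>lborel)"
    unfolding cg_def using pre by (simp add: emeasure_density)
  also have "\<dots> = (\<integral>\<^sup>+z. ennreal (cgauss_density v (phi z)) * indicator A (phi z) \<partial>lborel)"
    using phi(3) by (intro nn_integral_cong) (simp add: cgauss_density_def indicator_def)
  also have "\<dots> = (\<integral>\<^sup>+w. ennreal (cgauss_density v w) * indicator A w \<partial>(distr lborel borel phi))"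
    by (intro nn_integral_distr[symmetric] phiL) measurable
  also have "\<dots> = emeasure (cg v) A"
    unfolding cg_def phi(2) using A by (simp add: emeasure_density)
  finally show "emeasure (distr (cg v) borel phi) A = emeasure (cg v) A" .
qed

lemma cg_rot: "cmod u = 1 \<Longrightarrow> distr (cg v) borel (\<lambda>z. u * z) = cg v"
  by (rule cg_inv) (auto simp: lborel_complex_rot norm_mult)

lemma cg_cnj: "distr (cg v) borel cnj = cg v"
  by (rule cg_inv) (auto simp: lborel_complex_cnj)

lemma line_null_lborel:
  assumes "a \<noteq> 0" shows "{z::complex. a \<bullet> z = r} \<in> null_sets lborel"
proof -
  have "negligible {z::complex. a \<bullet> z = r}" using assms by (intro negligible_hyperplane) simp
  then have "{z::complex. a \<bullet> z = r} \<in> null_sets lebesgue" by (simp add: negligible_iff_null_sets)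
  moreover have "{z::complex. a \<bullet> z = r} \<in> sets lborel"
    using closed_hyperplane[of a r] by (simp add: borel_closed)
  ultimately show ?thesis by (simp add: null_sets_completion_iff)
qed

lemma cg_null: assumes N: "N \<in> null_sets lborel" shows "emeasure (cg v) N = 0"
proof -
  have "N \<in> sets lborel" using N by auto
  then have "emeasure (cg v) N = (\<integral>\<^sup>+x. ennreal (cgauss_density v x) * indicator N x \<partial>lborel)"
    unfolding cg_def by (intro emeasure_density) auto
  also have "\<dots> = 0" using N by (rule nn_integral_null_set)
  finally show ?thesis .
qed

lemma cg_line_null: "a \<noteq> 0 \<Longrightarrow> emeasure (cg v) {z. a \<bullet> z = r} = 0"
  by (intro cg_null line_null_lborel)

lemma cg_point_null: "emeasure (cg v) {z} = 0"
  by (intro cg_null) (simp add: null_sets_def)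


lemma psk_cis: "psk D l = cis (pi * (2 * real l + 1) / real D)"
  by (simp add: psk_def cis_conv_exp)

lemma psk_norm[simp]: "cmod (psk D l) = 1"
  by (simp add: psk_cis)

lemma psk_rot:
  assumes "D > 0"
  shows "cis (2 * pi * real k / real D) * psk D l = psk D (l + k)"
  using assms by (simp add: psk_cis cis_mult field_simps)

lemma psk_add_D:
  assumes "D > 0"
  shows "psk D (l + D * q) = psk D l"
proof -
  have "psk D (l + D * q) = cis (2 * pi * real (D * q) / real D) * psk D l"
    using psk_rot[OF assms, of "D * q" l] by (simp add: add.commute)
  also have "2 * pi * real (D * q) / real D = 2 * pi * real q" using assms by simp
  also have "cis (2 * pi * real q) = 1" by (rule cis_multiple_2pi) simp
  finally show ?thesis by simp
qed

lemma psk_mod: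
  assumes "D > 0"
  shows "psk D (l mod D) = psk D l"
  using psk_add_D[OF assms, of "l mod D" "l div D"] by simp

lemma psk_inj:
  assumes "D > 0" shows "inj_on (psk D) {0..<D}"
proof (rule inj_onI)
  fix l m assume l: "l \<in> {0..<D}" and m: "m \<in> {0..<D}" and eq: "psk D l = psk D m"
  then obtain n :: int where n: "\<i> * complex_of_real (pi * (2 * real l + 1) / real D)
      = \<i> * complex_of_real (pi * (2 * real m + 1) / real D) + (of_int (2 * n) * pi) * \<i>"
    unfolding psk_def exp_eq by blast
  then have "pi * (2 * real l + 1) / real D = pi * (2 * real m + 1) / real D + 2 * n * pi"
    by (simp add: complex_eq_iff)
  then have "pi * (2 * real l + 1) = pi * (2 * real m + 1) + 2 * n * pi * real D"
    using assms by (simp add: field_simps)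
  then have "pi * (2 * real l) = pi * (2 * real m + 2 * n * real D)"
    by (simp add: algebra_simps)
  then have "real l = real m + n * real D" by simp
  then have "real_of_int (int l) = real_of_int (int m + n * int D)" by simp
  then have *: "int l = int m + n * int D" using of_int_eq_iff by blast
  from l m have lt: "int l < int D" "int m < int D" by auto
  have a: "n * int D < int D" "- int D < n * int D" using * lt by linarith+
  have "n = 0"
  proof (rule ccontr)
    assume "n \<noteq> 0"
    then have "n \<ge> 1 \<or> n \<le> -1" by linarith
    then show False
    proof
      assume "n \<ge> 1" then have "n * int D \<ge> 1 * int D" by (intro mult_right_mono) auto
      with a show False by linarith
    next
      assume "n \<le> -1" then have "n * int D \<le> (-1) * int D" by (intro mult_right_mono) auto
      with a show False by linarith
    qed
  qed
  with * show "l = m" by simp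
qed

lemma psk_set_finite[simp]: "finite (psk_set D)"
  by (simp add: psk_set_def)

lemma psk_set_ne: "D > 0 \<Longrightarrow> psk_set D \<noteq> {}"
  by (simp add: psk_set_def)

lemma psk_set_norm: "s \<in> psk_set D \<Longrightarrow> cmod s = 1"
  by (auto simp: psk_set_def)

lemma psk_in_set: "D > 0 \<Longrightarrow> psk D l \<in> psk_set D"
  unfolding psk_set_def using psk_mod[of D l, symmetric] by auto

lemma psk_set_rot:
  assumes "D > 0"
  shows "(\<lambda>z. cis (2 * pi * real k / real D) * z) ` psk_set D = psk_set D"
proof (rule endo_inj_surj)
  show "(\<lambda>z. cis (2 * pi * real k / real D) * z) ` psk_set D \<subseteq> psk_set D"
    using assms by (auto simp: psk_set_def psk_rot psk_in_set[unfolded psk_set_def])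
  show "inj_on (\<lambda>z. cis (2 * pi * real k / real D) * z) (psk_set D)"
    by (rule inj_onI) simp
qed simp

definition refl_psk :: "nat \<Rightarrow> complex \<Rightarrow> complex" where
  "refl_psk D z = (psk D 0)^2 * cnj z"

lemma refl_psk_psk:
  assumes "D > 0" "l \<le> D"
  shows "refl_psk D (psk D l) = psk D (D - l)"
proof -
  have "refl_psk D (psk D l) = cis (pi * (1 - 2 * real l) / real D)"
    by (simp add: refl_psk_def psk_cis cis_cnj power2_eq_square cis_mult field_simps diff_divide_distrib add_divide_distrib)
  also have "\<dots> = cis (pi * (1 - 2 * real l) / real D) * cis (2 * pi * real (1::nat))"
    by simp
  also have "\<dots> = psk D (D - l)"
    using assms by (simp add: psk_cis cis_mult of_nat_diff field_simps)
  finally show ?thesis .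
qed

lemma refl_psk_set:
  assumes "D > 0"
  shows "refl_psk D ` psk_set D = psk_set D"
proof (rule endo_inj_surj)
  show "refl_psk D ` psk_set D \<subseteq> psk_set D"
    using assms by (auto simp: psk_set_def refl_psk_psk psk_in_set[unfolded psk_set_def])
  show "inj_on (refl_psk D) (psk_set D)"
  proof (rule inj_onI)
    fix x y assume "refl_psk D x = refl_psk D y"
    moreover have "psk D 0 \<noteq> 0" using psk_norm[of D 0] by (metis norm_zero zero_neq_one)
    ultimately show "x = y" by (simp add: refl_psk_def)
  qed
qed simp

lemma refl_psk_iso: "cmod (refl_psk D a - refl_psk D b) = cmod (a - b)"
proof -
  have "refl_psk D a - refl_psk D b = (psk D 0)^2 * cnj (a - b)" by (simp add: refl_psk_def algebra_simps)
  then have "cmod (refl_psk D a - refl_psk D b) = cmod ((psk D 0)^2) * cmod (cnj (a - b))" by (simp only: norm_mult)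
  also have "\<dots> = cmod (a - b)" by (simp only: complex_mod_cnj norm_power psk_norm) simp
  finally show ?thesis .
qed

lemma rot_iso: "cmod u = 1 \<Longrightarrow> cmod (u * a - u * b) = cmod (a - b)"
proof -
  assume "cmod u = 1"
  moreover have "u * a - u * b = u * (a - b)" by (simp add: algebra_simps)
  ultimately show ?thesis by (simp add: norm_mult)
qed


definition ties :: "nat \<Rightarrow> complex set" where
  "ties D = {z. \<exists>s\<in>psk_set D. \<exists>s'\<in>psk_set D. s \<noteq> s' \<and> cmod (s - z) = cmod (s' - z)}"

lemma psk_detect_arg_min: "psk_detect D z = arg_min_on (\<lambda>s. (cmod (s - z))^2) (psk_set D)"
  by (simp add: psk_detect_def arg_min_on_def)

lemma det_mem: "D > 0 \<Longrightarrow> psk_detect D z \<in> psk_set D"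
  unfolding psk_detect_arg_min by (rule arg_min_if_finite(1)) (auto simp: psk_set_ne)

lemma det_min:
  assumes "D > 0" "y \<in> psk_set D"
  shows "cmod (psk_detect D z - z) \<le> cmod (y - z)"
proof -
  have "\<not> (cmod (y - z))^2 < (cmod (psk_detect D z - z))^2"
    using arg_min_if_finite(2)[of "psk_set D" "\<lambda>s. (cmod (s - z))^2"] assms
    unfolding psk_detect_arg_min by (auto simp: psk_set_ne)
  then have "(cmod (psk_detect D z - z))^2 \<le> (cmod (y - z))^2" by (metis not_less)
  then show ?thesis by (rule power2_le_imp_le) simp
qed

lemma det_unique:
  assumes D: "D > 0" and z: "z \<notin> ties D" and s: "s \<in> psk_set D"
    and min: "\<And>y. y \<in> psk_set D \<Longrightarrow> cmod (s - z) \<le> cmod (y - z)"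
  shows "psk_detect D z = s"
proof (rule ccontr)
  assume ne: "psk_detect D z \<noteq> s"
  have "cmod (psk_detect D z - z) \<le> cmod (s - z)" using det_min[OF D s] .
  moreover have "cmod (s - z) \<le> cmod (psk_detect D z - z)" using min[OF det_mem[OF D]] .
  ultimately have "cmod (psk_detect D z - z) = cmod (s - z)" by simp
  with ne det_mem[OF D] s have "z \<in> ties D" unfolding ties_def by blast
  with z show False by simp
qed

lemma det_equiv:
  assumes D: "D > 0" and iso: "\<And>a b. cmod (phi a - phi b) = cmod (a - b)"
    and img: "phi ` psk_set D = psk_set D" and z: "z \<notin> ties D"
  shows "phi z \<notin> ties D" "psk_detect D (phi z) = phi (psk_detect D z)"
proof -
  show nt: "phi z \<notin> ties D"
  proof
    assume "phi z \<in> ties D"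
    then obtain s s' where ss: "s \<in> psk_set D" "s' \<in> psk_set D" "s \<noteq> s'" "cmod (s - phi z) = cmod (s' - phi z)"
      unfolding ties_def by blast
    from ss(1) img obtain t where t: "t \<in> psk_set D" "s = phi t" by blast
    from ss(2) img obtain t' where t': "t' \<in> psk_set D" "s' = phi t'" by blast
    have "t \<noteq> t'" using ss(3) t t' by blast
    moreover have "cmod (t - z) = cmod (t' - z)" using ss(4) t t' iso by simp
    ultimately have "z \<in> ties D" using t t' unfolding ties_def by blast
    with z show False by simp
  qed
  show "psk_detect D (phi z) = phi (psk_detect D z)"
  proof (rule det_unique[OF D nt])
    show "phi (psk_detect D z) \<in> psk_set D" using det_mem[OF D] img by blast
    fix y assume "y \<in> psk_set D"
    with img obtain y0 where y0: "y0 \<in> psk_set D" "y = phi y0" by blast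
    show "cmod (phi (psk_detect D z) - phi z) \<le> cmod (y - phi z)"
      using det_min[OF D y0(1), of z] y0 iso by simp
  qed
qed

lemma tie_line:
  assumes s: "cmod s = 1" and s': "cmod s' = 1" and eq: "cmod (s - z) = cmod (s' - z)"
  shows "(s - s') \<bullet> z = 0"
proof -
  have n1: "(Re s)^2 + (Im s)^2 = 1" using s by (simp add: cmod_def)
  have n2: "(Re s')^2 + (Im s')^2 = 1" using s' by (simp add: cmod_def)
  have "(cmod (s - z))^2 = (cmod (s' - z))^2" using eq by simp
  then have "(Re s - Re z)^2 + (Im s - Im z)^2 = (Re s' - Re z)^2 + (Im s' - Im z)^2"
    by (simp add: cmod_power2)
  then have "Re s * Re z + Im s * Im z = Re s' * Re z + Im s' * Im z"
    using n1 n2 by (simp add: power2_diff algebra_simps)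
  then show ?thesis by (simp add: inner_complex_def algebra_simps)
qed

lemma ties_subset:
  "ties D \<subseteq> (\<Union>s\<in>psk_set D. \<Union>s'\<in>psk_set D - {s}. {z. (s - s') \<bullet> z = 0})"
proof
  fix z assume "z \<in> ties D"
  then obtain s s' where ss: "s \<in> psk_set D" "s' \<in> psk_set D" "s \<noteq> s'" "cmod (s - z) = cmod (s' - z)"
    unfolding ties_def by blast
  then have "(s - s') \<bullet> z = 0" by (intro tie_line psk_set_norm)
  with ss show "z \<in> (\<Union>s\<in>psk_set D. \<Union>s'\<in>psk_set D - {s}. {z. (s - s') \<bullet> z = 0})" by blast
qed

lemma det_measurable[measurable]: "psk_detect D \<in> borel_measurable borel"
proof -
  define PS where "PS = psk_set D"
  define C where "C = (\<lambda>s. {z. \<forall>y\<in>PS. cmod (s - z) \<le> cmod (y - z)})"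
  define T where "T = (\<lambda>z. {s \<in> PS. z \<in> C s})"
  have fin: "finite PS" by (simp add: PS_def)
  have eq: "psk_detect D = (\<lambda>U. SOME s. s \<in> U) \<circ> T"
  proof
    fix z
    have "\<And>x. is_arg_min (\<lambda>s. (cmod (s - z))^2) (\<lambda>s. s \<in> PS) x \<longleftrightarrow> x \<in> T z"
      by (auto simp: is_arg_min_def T_def C_def not_less)
    then show "psk_detect D z = ((\<lambda>U. SOME s. s \<in> U) \<circ> T) z"
      by (simp add: psk_detect_def arg_min_def PS_def)
  qed
  have Cs: "C s \<in> sets borel" for s
  proof -
    have "{z \<in> space borel. \<forall>y\<in>PS. cmod (s - z) \<le> cmod (y - z)} \<in> sets borel"
      by (rule sets.sets_Collect_finite_All[OF _ fin]) measurable
    then show ?thesis by (simp add: C_def)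
  qed
  have finP: "finite (Pow PS)" using fin by simp
  have Tm: "T \<in> measurable borel (count_space (Pow PS))"
    unfolding measurable_count_space_eq2[OF finP]
  proof (intro conjI ballI)
    show "T \<in> space borel \<rightarrow> Pow PS" by (auto simp: T_def)
  next
    fix U assume "U \<in> Pow PS"
    then have U: "U \<subseteq> PS" by simp
    have Teq: "\<And>z. T z = U \<longleftrightarrow> (\<forall>s\<in>PS. (s \<in> U \<longleftrightarrow> z \<in> C s))"
      using U unfolding T_def by blast
    have "T -` {U} \<inter> space borel = {z \<in> space borel. \<forall>s\<in>PS. (s \<in> U \<longleftrightarrow> z \<in> C s)}" (is "?L = ?R")
    proof (rule set_eqI)
      fix z show "z \<in> ?L \<longleftrightarrow> z \<in> ?R" using Teq[of z] by simp
    qed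
    also have "\<dots> \<in> sets borel"
    proof (rule sets.sets_Collect_finite_All[OF _ fin])
      fix s assume "s \<in> PS"
      have "{z \<in> space borel. (s \<in> U \<longleftrightarrow> z \<in> C s)} = (if s \<in> U then C s else UNIV - C s)"
        by (cases "s \<in> U") auto
      then show "{z \<in> space borel. (s \<in> U \<longleftrightarrow> z \<in> C s)} \<in> sets borel"
        using Cs[of s] by auto
    qed
    finally show "T -` {U} \<inter> space borel \<in> sets borel" .
  qed
  have "(\<lambda>U. SOME s. s \<in> U) \<circ> T \<in> borel_measurable borel"
    by (rule measurable_comp[OF Tm]) simp
  then show ?thesis by (simp add: eq)
qed


lemma inner_complex_Re: "x \<bullet> y = Re (cnj x * y)"
  by (simp add: inner_complex_def)

lemma equalized_measurable[measurable]:
  "(\<lambda>t. equalized P (fst t) s (fst (snd t)) (snd (snd t))) \<in> borel_measurable (borel \<Otimes>\<^sub>M (borel \<Otimes>\<^sub>M borel))"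
  unfolding equalized_def by measurable

locale Q3loc =
  fixes v1 v2 v3 :: real
  assumes p1: "prob_space (cg v1)" and p2: "prob_space (cg v2)" and p3: "prob_space (cg v3)"
begin

definition Q3 :: "(complex \<times> complex \<times> complex) measure" where
  "Q3 = cg v1 \<Otimes>\<^sub>M (cg v2 \<Otimes>\<^sub>M cg v3)"

lemma prob_Q3: "prob_space Q3"
  unfolding Q3_def by (intro prob_space_pair p1 p2 p3)

lemma prob_Q23: "prob_space (cg v2 \<Otimes>\<^sub>M cg v3)"
  by (intro prob_space_pair p2 p3)

lemma sets_Q3: "sets Q3 = sets (borel \<Otimes>\<^sub>M (borel \<Otimes>\<^sub>M borel))"
  unfolding Q3_def by (intro sets_pair_measure_cong) (simp_all add: sets_pair_measure_cong)

lemma space_Q3[simp]: "space Q3 = UNIV"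
  unfolding Q3_def by (simp add: space_pair_measure)

lemma meas_Q3: "measurable Q3 N = measurable (borel \<Otimes>\<^sub>M (borel \<Otimes>\<^sub>M borel)) N"
  by (rule measurable_cong_sets[OF sets_Q3 refl])

lemma Q3_inv:
  assumes f: "f \<in> borel \<rightarrow>\<^sub>M borel" "distr (cg v1) borel f = cg v1"
    and g: "g \<in> borel \<rightarrow>\<^sub>M borel" "distr (cg v2) borel g = cg v2"
    and h: "h \<in> borel \<rightarrow>\<^sub>M borel" "distr (cg v3) borel h = cg v3"
  shows "distr Q3 Q3 (\<lambda>(a,b,c). (f a, g b, h c)) = Q3"
proof -
  have mf: "f \<in> cg v1 \<rightarrow>\<^sub>M borel" using f(1) by (simp add: measurable_cong_sets[OF sets_cg refl])
  have mg: "g \<in> cg v2 \<rightarrow>\<^sub>M borel" using g(1) by (simp add: measurable_cong_sets[OF sets_cg refl])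
  have mh: "h \<in> cg v3 \<rightarrow>\<^sub>M borel" using h(1) by (simp add: measurable_cong_sets[OF sets_cg refl])
  have mgh: "(\<lambda>(x, y). (g x, h y)) \<in> (cg v2 \<Otimes>\<^sub>M cg v3) \<rightarrow>\<^sub>M (borel \<Otimes>\<^sub>M borel)"
    using mg mh by measurable
  have sf3: "sigma_finite_measure (distr (cg v3) borel h)"
    using h(2) p3 by (simp add: prob_space_imp_sigma_finite)
  have sf23: "sigma_finite_measure (distr (cg v2 \<Otimes>\<^sub>M cg v3) (borel \<Otimes>\<^sub>M borel) (\<lambda>(x, y). (g x, h y)))"
  proof -
    have "distr (cg v2) borel g \<Otimes>\<^sub>M distr (cg v3) borel h = distr (cg v2 \<Otimes>\<^sub>M cg v3) (borel \<Otimes>\<^sub>M borel) (\<lambda>(x, y). (g x, h y))"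
      by (rule pair_measure_distr[OF mg mh sf3])
    then show ?thesis using g(2) h(2) prob_Q23 by (simp add: prob_space_imp_sigma_finite)
  qed
  have "Q3 = distr (cg v1) borel f \<Otimes>\<^sub>M (distr (cg v2) borel g \<Otimes>\<^sub>M distr (cg v3) borel h)"
    by (simp add: f(2) g(2) h(2) Q3_def)
  also have "distr (cg v2) borel g \<Otimes>\<^sub>M distr (cg v3) borel h = distr (cg v2 \<Otimes>\<^sub>M cg v3) (borel \<Otimes>\<^sub>M borel) (\<lambda>(x, y). (g x, h y))"
    by (rule pair_measure_distr[OF mg mh sf3])
  also have "distr (cg v1) borel f \<Otimes>\<^sub>M \<dots> = distr (cg v1 \<Otimes>\<^sub>M (cg v2 \<Otimes>\<^sub>M cg v3)) (borel \<Otimes>\<^sub>M (borel \<Otimes>\<^sub>M borel))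
      (\<lambda>(x, y). (f x, (\<lambda>(x, y). (g x, h y)) y))"
    by (rule pair_measure_distr[OF mf mgh sf23])
  also have "\<dots> = distr Q3 Q3 (\<lambda>(a,b,c). (f a, g b, h c))"
    unfolding Q3_def[symmetric] by (intro distr_cong) (auto simp: sets_Q3)
  finally show ?thesis by simp
qed

lemma Q3_measure_inv:
  assumes inv: "distr Q3 Q3 F = Q3" and F: "F \<in> Q3 \<rightarrow>\<^sub>M Q3" and A: "A \<in> sets Q3"
  shows "measure Q3 (F -` A) = measure Q3 A"
proof -
  have "measure Q3 A = measure (distr Q3 Q3 F) A" by (simp add: inv)
  also have "\<dots> = measure Q3 (F -` A \<inter> space Q3)" by (rule measure_distr[OF F A])
  finally show ?thesis by simp
qed

lemma tie_null:
  assumes c: "c \<noteq> 0"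
  shows "emeasure Q3 {t. c \<bullet> equalized P (fst t) s (fst (snd t)) (snd (snd t)) = 0} = 0"
proof -
  let ?X = "{t. c \<bullet> equalized P (fst t) s (fst (snd t)) (snd (snd t)) = 0}"
  interpret P23: prob_space "cg v2 \<Otimes>\<^sub>M cg v3" by (rule prob_Q23)
  interpret P3: prob_space "cg v3" by (rule p3)
  interpret P2: prob_space "cg v2" by (rule p2)
  have Xs: "?X \<in> sets Q3"
  proof -
    have "(\<lambda>t. c \<bullet> equalized P (fst t) s (fst (snd t)) (snd (snd t))) \<in> borel_measurable (borel \<Otimes>\<^sub>M (borel \<Otimes>\<^sub>M borel))"
      by measurable
    then have "{t \<in> space (borel \<Otimes>\<^sub>M (borel \<Otimes>\<^sub>M borel)). c \<bullet> equalized P (fst t) s (fst (snd t)) (snd (snd t)) = 0} \<in> sets (borel \<Otimes>\<^sub>M (borel \<Otimes>\<^sub>M borel))"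
      by measurable
    then show ?thesis by (simp add: sets_Q3 space_pair_measure)
  qed
  have inner0: "emeasure (cg v2 \<Otimes>\<^sub>M cg v3) (Pair a -` ?X) = 0" for a
  proof -
    have sec: "Pair a -` ?X \<in> sets (cg v2 \<Otimes>\<^sub>M cg v3)" using Xs unfolding Q3_def by (rule sets_Pair1)
    have "emeasure (cg v2 \<Otimes>\<^sub>M cg v3) (Pair a -` ?X) = (\<integral>\<^sup>+b. emeasure (cg v3) (Pair b -` (Pair a -` ?X)) \<partial>cg v2)"
      by (rule P3.emeasure_pair_measure_alt[OF sec])
    also have "\<dots> \<le> (\<integral>\<^sup>+b. indicator {- (complex_of_real (sqrt P) * a)} b \<partial>cg v2)"
    proof (rule nn_integral_mono)
      fix b
      show "emeasure (cg v3) (Pair b -` (Pair a -` ?X)) \<le> indicator {- (complex_of_real (sqrt P) * a)} b"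
      proof (cases "complex_of_real (sqrt P) * a + b = 0")
        case True
        then have "b = - (complex_of_real (sqrt P) * a)" by (simp add: eq_neg_iff_add_eq_0 add.commute)
        then show ?thesis using P3.emeasure_le_1 by simp
      next
        case False
        define B where "B = complex_of_real (sqrt P) * a + b"
        define k where "k = complex_of_real (sqrt P) * a * s"
        define a' where "a' = c / cnj B"
        have B0: "B \<noteq> 0" using False by (simp add: B_def)
        have a'0: "a' \<noteq> 0" using c B0 by (simp add: a'_def)
        have "Pair b -` (Pair a -` ?X) = {z. a' \<bullet> z = - (a' \<bullet> k)}"
        proof (rule set_eqI)
          fix z
          have "c \<bullet> ((k + z) / B) = a' \<bullet> (k + z)"
            by (simp add: inner_complex_Re a'_def complex_cnj_divide field_simps)
          then show "z \<in> Pair b -` (Pair a -` ?X) \<longleftrightarrow> z \<in> {z. a' \<bullet> z = - (a' \<bullet> k)}"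
            by (auto simp: equalized_def B_def[symmetric] k_def[symmetric] inner_add_right)
        qed
        then have "emeasure (cg v3) (Pair b -` (Pair a -` ?X)) = 0"
          using cg_line_null[OF a'0] by simp
        then show ?thesis by simp
      qed
    qed
    also have "\<dots> = emeasure (cg v2) {- (complex_of_real (sqrt P) * a)}"
      by (intro nn_integral_indicator) simp
    also have "\<dots> = 0" by (rule cg_point_null)
    finally show ?thesis by simp
  qed
  have "emeasure Q3 ?X = (\<integral>\<^sup>+a. emeasure (cg v2 \<Otimes>\<^sub>M cg v3) (Pair a -` ?X) \<partial>cg v1)"
    unfolding Q3_def by (rule P23.emeasure_pair_measure_alt) (use Xs in \<open>simp only: Q3_def\<close>)
  also have "\<dots> = (\<integral>\<^sup>+a. 0 \<partial>cg v1)" by (rule nn_integral_cong) (rule inner0)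
  also have "\<dots> = 0" by simp
  finally show ?thesis .
qed

end

lemma cg_id: "distr (cg v) borel (\<lambda>x. x) = cg v"
  by (rule distr_id2) simp

lemma cg_refl:
  assumes "cmod r = 1"
  shows "distr (cg v) borel (\<lambda>z. r * cnj z) = cg v"
proof -
  have "distr (cg v) borel (\<lambda>z. r * cnj z) = distr (cg v) borel ((\<lambda>z. r * z) \<circ> cnj)"
    by (simp add: comp_def)
  also have "\<dots> = distr (distr (cg v) borel cnj) borel (\<lambda>z. r * z)"
    by (rule distr_distr[symmetric]) (auto simp: measurable_cong_sets[OF sets_cg refl])
  also have "\<dots> = cg v" by (simp add: cg_cnj cg_rot assms)
  finally show ?thesis .
qed

locale Q3D = Q3loc +
  fixes D :: nat and P :: real
  assumes D: "D > 0"
begin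

definition eqs :: "complex \<Rightarrow> complex \<times> complex \<times> complex \<Rightarrow> complex" where
  "eqs s t = equalized P (fst t) s (fst (snd t)) (snd (snd t))"

lemma eqs_meas[measurable]: "eqs s \<in> borel_measurable Q3"
  unfolding meas_Q3 eqs_def by measurable

lemma det_eqs_meas[measurable]: "(\<lambda>t. psk_detect D (eqs s t)) \<in> borel_measurable Q3"
  by measurable

lemma det_eqs_sets[measurable]: "{t. psk_detect D (eqs s t) = w} \<in> sets Q3"
proof -
  have "{t \<in> space Q3. psk_detect D (eqs s t) = w} \<in> sets Q3" by measurable
  then show ?thesis by simp
qed

lemma AE_not_tie: "AE t in Q3. eqs s t \<notin> ties D"
proof -
  have "AE t in Q3. \<forall>s1\<in>psk_set D. \<forall>s2\<in>psk_set D - {s1}. (s1 - s2) \<bullet> eqs s t \<noteq> 0"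
  proof (intro AE_finite_allI)
    fix s1 s2 assume "s1 \<in> psk_set D" "s2 \<in> psk_set D - {s1}"
    then have c: "s1 - s2 \<noteq> 0" by auto
    have "{t. (s1 - s2) \<bullet> eqs s t = 0} \<in> sets Q3"
    proof -
      have "{t \<in> space Q3. (s1 - s2) \<bullet> eqs s t = 0} \<in> sets Q3" by measurable
      then show ?thesis by simp
    qed
    moreover have "emeasure Q3 {t. (s1 - s2) \<bullet> eqs s t = 0} = 0"
      using tie_null[OF c, of P s] by (simp add: eqs_def)
    ultimately show "AE t in Q3. (s1 - s2) \<bullet> eqs s t \<noteq> 0"
      by (subst AE_iff_measurable) auto
  qed auto
  then show ?thesis
    by eventually_elim (use ties_subset[of D] in blast)
qed

lemma prob_meas_inv:
  assumes inv: "distr Q3 Q3 F = Q3" and F: "F \<in> Q3 \<rightarrow>\<^sub>M Q3"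
  shows "measure Q3 {t. psk_detect D (eqs s (F t)) = w} = measure Q3 {t. psk_detect D (eqs s t) = w}"
proof -
  have "F -` {t. psk_detect D (eqs s t) = w} = {t. psk_detect D (eqs s (F t)) = w}" by auto
  then show ?thesis using Q3_measure_inv[OF inv F det_eqs_sets] by simp
qed

definition Qw :: "complex \<Rightarrow> real" where
  "Qw w = measure Q3 {t. psk_detect D (eqs (psk D 0) t) = w}"

lemma measQ3: "measurable Q3 Q3 = measurable (borel \<Otimes>\<^sub>M (borel \<Otimes>\<^sub>M borel)) (borel \<Otimes>\<^sub>M (borel \<Otimes>\<^sub>M borel))"
  using measurable_cong_sets[OF sets_Q3 sets_Q3] .

lemma K1:
  fixes l :: nat and w :: complex
  defines "u \<equiv> cis (2 * pi * real l / real D)"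
  shows "measure Q3 {t. psk_detect D (eqs (psk D l) t) = w} = Qw (cnj u * w)"
proof -
  let ?F = "\<lambda>(a::complex, b::complex, c::complex). (a, b, u * c)"
  have u1: "cmod u = 1" by (simp add: u_def)
  have inv: "distr Q3 Q3 (\<lambda>(a,b,c). ((\<lambda>x. x) a, (\<lambda>x. x) b, (\<lambda>z. u * z) c)) = Q3"
    by (rule Q3_inv) (simp_all add: cg_id cg_rot u1)
  have Fm: "(\<lambda>(a,b,c). ((\<lambda>x. x) a, (\<lambda>x. x) b, (\<lambda>z. u * z) c)) \<in> Q3 \<rightarrow>\<^sub>M Q3"
    unfolding measQ3 by measurable
  have pl: "psk D l = u * psk D 0" using psk_rot[OF D, of l 0] by (simp add: u_def)
  have e1: "eqs (psk D l) ((\<lambda>(a,b,c). ((\<lambda>x. x) a, (\<lambda>x. x) b, (\<lambda>z. u * z) c)) t) = u * eqs (psk D 0) t" for t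
  proof -
    obtain a b c where t: "t = (a, b, c)" by (cases t) auto
    have "complex_of_real (sqrt P) * a * (u * psk D 0) + u * c = u * (complex_of_real (sqrt P) * a * psk D 0 + c)"
      by (simp add: algebra_simps)
    then show ?thesis by (simp add: t eqs_def equalized_def pl)
  qed
  have "measure Q3 {t. psk_detect D (eqs (psk D l) t) = w}
      = measure Q3 {t. psk_detect D (u * eqs (psk D 0) t) = w}"
    using prob_meas_inv[OF inv Fm, of "psk D l" w] by (simp only: e1)
  also have "\<dots> = measure Q3 {t. u * psk_detect D (eqs (psk D 0) t) = w}"
  proof (rule measure_eq_AE)
    show "AE t in Q3. (t \<in> {t. psk_detect D (u * eqs (psk D 0) t) = w}) = (t \<in> {t. u * psk_detect D (eqs (psk D 0) t) = w})"
      using AE_not_tie[of "psk D 0"]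
    proof eventually_elim
      case (elim t)
      have "psk_detect D (u * eqs (psk D 0) t) = u * psk_detect D (eqs (psk D 0) t)"
        by (rule det_equiv(2)[OF D _ _ elim]) (auto simp: rot_iso u1 psk_set_rot[OF D] u_def)
      then show ?case by simp
    qed
    show "{t. psk_detect D (u * eqs (psk D 0) t) = w} \<in> sets Q3"
    proof -
      have "{t \<in> space Q3. psk_detect D (u * eqs (psk D 0) t) = w} \<in> sets Q3" by measurable
      then show ?thesis by simp
    qed
    show "{t. u * psk_detect D (eqs (psk D 0) t) = w} \<in> sets Q3"
    proof -
      have "{t \<in> space Q3. u * psk_detect D (eqs (psk D 0) t) = w} \<in> sets Q3" by measurable
      then show ?thesis by simp
    qed
  qed
  also have "{t. u * psk_detect D (eqs (psk D 0) t) = w} = {t. psk_detect D (eqs (psk D 0) t) = cnj u * w}"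
  proof -
    have cu: "cnj u * u = 1" using u1 by (simp add: complex_norm_square[symmetric] mult.commute)
    have "\<And>x. u * x = w \<longleftrightarrow> x = cnj u * w"
    proof
      fix x assume "u * x = w" then have "cnj u * (u * x) = cnj u * w" by simp
      then show "x = cnj u * w" by (simp add: mult.assoc[symmetric] cu)
    next
      fix x assume "x = cnj u * w" then show "u * x = w"
        by (simp add: mult.assoc[symmetric] cu mult.commute[of u])
    qed
    then show ?thesis by auto
  qed
  finally show ?thesis by (simp add: Qw_def)
qed

lemma refl_psk_inj: "refl_psk D a = refl_psk D b \<Longrightarrow> a = b"
  using refl_psk_iso[of D a b] by simp

lemma K2: "Qw (refl_psk D w) = Qw w"
proof -
  define r where "r = (psk D 0)^2"
  have r1: "cmod r = 1" by (simp add: r_def norm_power)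
  have inv: "distr Q3 Q3 (\<lambda>(a,b,c). (cnj a, cnj b, (\<lambda>z. r * cnj z) c)) = Q3"
    by (rule Q3_inv) (simp_all add: cg_cnj cg_refl r1)
  have Rm: "(\<lambda>(a,b,c). (cnj a, cnj b, (\<lambda>z. r * cnj z) c)) \<in> Q3 \<rightarrow>\<^sub>M Q3"
    unfolding measQ3 by measurable
  have s1: "psk D 0 * cnj (psk D 0) = 1"
    using psk_norm[of D 0] by (simp add: complex_norm_square[symmetric])
  have e2: "eqs (psk D 0) ((\<lambda>(a,b,c). (cnj a, cnj b, (\<lambda>z. r * cnj z) c)) t) = refl_psk D (eqs (psk D 0) t)" for t
  proof -
    obtain a b c where t: "t = (a, b, c)" by (cases t) auto
    have "r * (complex_of_real (sqrt P) * cnj a * cnj (psk D 0) + cnj c)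
        = complex_of_real (sqrt P) * cnj a * psk D 0 * (psk D 0 * cnj (psk D 0)) + r * cnj c"
      by (simp add: r_def power2_eq_square algebra_simps)
    also have "\<dots> = complex_of_real (sqrt P) * cnj a * psk D 0 + r * cnj c" by (simp add: s1)
    finally have num: "r * (complex_of_real (sqrt P) * cnj a * cnj (psk D 0) + cnj c)
        = complex_of_real (sqrt P) * cnj a * psk D 0 + r * cnj c" .
    have "refl_psk D (eqs (psk D 0) t) = r * ((complex_of_real (sqrt P) * cnj a * cnj (psk D 0) + cnj c) / (complex_of_real (sqrt P) * cnj a + cnj b))"
      by (simp add: refl_psk_def r_def[symmetric] eqs_def equalized_def t)
    also have "\<dots> = (complex_of_real (sqrt P) * cnj a * psk D 0 + r * cnj c) / (complex_of_real (sqrt P) * cnj a + cnj b)"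
      by (simp add: num[symmetric])
    finally show ?thesis by (simp add: eqs_def equalized_def t)
  qed
  have "Qw (refl_psk D w) = measure Q3 {t. psk_detect D (eqs (psk D 0) t) = refl_psk D w}"
    by (simp add: Qw_def)
  also have "\<dots> = measure Q3 {t. psk_detect D (refl_psk D (eqs (psk D 0) t)) = refl_psk D w}"
    using prob_meas_inv[OF inv Rm, of "psk D 0" "refl_psk D w"] by (simp only: e2)
  also have "\<dots> = measure Q3 {t. refl_psk D (psk_detect D (eqs (psk D 0) t)) = refl_psk D w}"
  proof (rule measure_eq_AE)
    show "AE t in Q3. (t \<in> {t. psk_detect D (refl_psk D (eqs (psk D 0) t)) = refl_psk D w}) = (t \<in> {t. refl_psk D (psk_detect D (eqs (psk D 0) t)) = refl_psk D w})"
      using AE_not_tie[of "psk D 0"]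
    proof eventually_elim
      case (elim t)
      have "psk_detect D (refl_psk D (eqs (psk D 0) t)) = refl_psk D (psk_detect D (eqs (psk D 0) t))"
        by (rule det_equiv(2)[OF D _ _ elim]) (auto simp: refl_psk_iso refl_psk_set[OF D])
      then show ?case by simp
    qed
    show "{t. psk_detect D (refl_psk D (eqs (psk D 0) t)) = refl_psk D w} \<in> sets Q3"
    proof -
      have "{t \<in> space Q3. psk_detect D (refl_psk D (eqs (psk D 0) t)) = refl_psk D w} \<in> sets Q3"
        unfolding refl_psk_def by measurable
      then show ?thesis by simp
    qed
    show "{t. refl_psk D (psk_detect D (eqs (psk D 0) t)) = refl_psk D w} \<in> sets Q3"
    proof -
      have "{t \<in> space Q3. refl_psk D (psk_detect D (eqs (psk D 0) t)) = refl_psk D w} \<in> sets Q3"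
        unfolding refl_psk_def by measurable
      then show ?thesis by simp
    qed
  qed
  also have "{t. refl_psk D (psk_detect D (eqs (psk D 0) t)) = refl_psk D w} = {t. psk_detect D (eqs (psk D 0) t) = w}"
    using refl_psk_inj by blast
  finally show ?thesis by (simp add: Qw_def)
qed

lemma K3: "(\<Sum>w\<in>psk_set D. Qw w) = 1"
proof -
  define nu where "nu = distr Q3 borel (\<lambda>t. psk_detect D (eqs (psk D 0) t))"
  interpret Q: prob_space Q3 by (rule prob_Q3)
  have m: "(\<lambda>t. psk_detect D (eqs (psk D 0) t)) \<in> Q3 \<rightarrow>\<^sub>M borel" by measurable
  interpret N: prob_space nu unfolding nu_def by (rule Q.prob_space_distr[OF m])
  have "measure nu (psk_set D) = measure Q3 ((\<lambda>t. psk_detect D (eqs (psk D 0) t)) -` psk_set D \<inter> space Q3)"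
    unfolding nu_def by (rule measure_distr[OF m]) (intro borel_closed finite_imp_closed psk_set_finite)
  also have "(\<lambda>t. psk_detect D (eqs (psk D 0) t)) -` psk_set D \<inter> space Q3 = space Q3"
    using det_mem[OF D] by auto
  also have "measure Q3 (space Q3) = 1" by (rule Q.prob_space)
  finally have 1: "measure nu (psk_set D) = 1" .
  have "measure nu (psk_set D) = (\<Sum>w\<in>psk_set D. measure nu {w})"
    by (rule measure_eq_sum_singleton) (simp_all add: N.emeasure_finite, simp add: nu_def)
  also have "\<dots> = (\<Sum>w\<in>psk_set D. Qw w)"
  proof (rule sum.cong)
    fix w
    have "measure nu {w} = measure Q3 ((\<lambda>t. psk_detect D (eqs (psk D 0) t)) -` {w} \<inter> space Q3)"
      unfolding nu_def by (rule measure_distr[OF m]) simp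
    then show "measure nu {w} = Qw w" by (simp add: Qw_def vimage_def)
  qed simp
  finally show ?thesis using 1 by simp
qed

end

lemma pairL1: "(1 - cis (-x)) + (1 - cis x) = complex_of_real (2 - 2 * cos x)"
  by (simp add: complex_eq_iff)

lemma pairL2: "(1 - cis (-x))^2 + (1 - cis x)^2 = complex_of_real (2 - 4 * cos x + 2 * cos (2 * x))"
proof -
  have c2: "cos (2 * x) = (cos x)^2 - (sin x)^2" by (rule cos_double)
  show ?thesis unfolding c2 by (simp add: complex_eq_iff power2_eq_square algebra_simps)
qed

lemma pairL3: "(cmod (1 - cis (-x)))^2 + (cmod (1 - cis x))^2 = 4 - 4 * cos x"
proof -
  have "(cmod (1 - cis x))^2 = 2 - 2 * cos x" for x
  proof -
    have "(cmod (1 - cis x))^2 = (1 - cos x)^2 + (sin x)^2" by (simp add: cmod_power2)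
    also have "\<dots> = 2 - 2 * cos x" using sin_cos_squared_add[of x] by (simp add: power2_diff)
    finally show ?thesis .
  qed
  then show ?thesis by simp
qed

lemma sum_split_even:
  fixes F :: "nat \<Rightarrow> 'a::comm_monoid_add"
  assumes "even D" "D \<ge> 2"
  shows "(\<Sum>d<D. F d) = F 0 + F (D div 2) + (\<Sum>d=1..D div 2 - 1. F d + F (D - d))"
proof -
  obtain k where k: "D = 2 * k" using assms(1) by blast
  with assms have k1: "k \<ge> 1" by simp
  have kk: "D div 2 = k" using k by simp
  have split: "{..<D} = ({0} \<union> {1..k-1}) \<union> ({k} \<union> (\<lambda>d. D - d) ` {1..k-1})"
  proof (rule set_eqI)
    fix d
    show "d \<in> {..<D} \<longleftrightarrow> d \<in> ({0} \<union> {1..k-1}) \<union> ({k} \<union> (\<lambda>d. D - d) ` {1..k-1})"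
    proof
      assume d: "d \<in> {..<D}"
      show "d \<in> ({0} \<union> {1..k-1}) \<union> ({k} \<union> (\<lambda>d. D - d) ` {1..k-1})"
      proof (cases "d \<le> k")
        case True then show ?thesis by auto
      next
        case False
        then have "d = D - (D - d)" "D - d \<in> {1..k-1}" using d k by auto
        then show ?thesis by blast
      qed
    next
      assume "d \<in> ({0} \<union> {1..k-1}) \<union> ({k} \<union> (\<lambda>d. D - d) ` {1..k-1})"
      then show "d \<in> {..<D}" using k k1 by auto
    qed
  qed
  have inj: "inj_on (\<lambda>d. D - d) {1..k-1}" by (rule inj_onI) (use k in auto)
  have "(\<Sum>d<D. F d) = (\<Sum>d\<in>{0} \<union> {1..k-1}. F d) + (\<Sum>d\<in>{k} \<union> (\<lambda>d. D - d) ` {1..k-1}. F d)"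
    unfolding split by (rule sum.union_disjoint) (use k k1 in auto)
  also have "(\<Sum>d\<in>{0} \<union> {1..k-1}. F d) = F 0 + (\<Sum>d=1..k-1. F d)"
    by (subst sum.union_disjoint) auto
  also have "(\<Sum>d\<in>{k} \<union> (\<lambda>d. D - d) ` {1..k-1}. F d) = F k + (\<Sum>d\<in>(\<lambda>d. D - d) ` {1..k-1}. F d)"
    by (subst sum.union_disjoint) (use k in auto)
  also have "(\<Sum>d\<in>(\<lambda>d. D - d) ` {1..k-1}. F d) = (\<Sum>d=1..k-1. F (D - d))"
    by (subst sum.reindex[OF inj]) simp
  finally show ?thesis using k1 by (simp add: kk sum.distrib algebra_simps)
qed


lemma zeta_refl:
  assumes "D > 0" "d \<le> D"
  shows "cis (- (2 * pi * real (D - d) / real D)) = cis (2 * pi * real d / real D)"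
proof -
  have "- (2 * pi * real (D - d) / real D) = 2 * pi * real d / real D - 2 * pi"
    using assms by (simp add: of_nat_diff field_simps)
  then show ?thesis by (simp add: complex_eq_iff cos_diff sin_diff)
qed

locale final_alg =
  fixes D :: nat and p :: "nat \<Rightarrow> real"
  assumes ev: "even D" and D2: "D \<ge> 2"
    and sym: "\<And>d. d \<in> {1..D div 2 - 1} \<Longrightarrow> p (D - d) = p d"
    and tot: "(\<Sum>d<D. p d) = 1"
begin

definition zeta :: "nat \<Rightarrow> complex" where "zeta d = cis (- (2 * pi * real d / real D))"

definition th :: "nat \<Rightarrow> real" where "th d = 2 * pi * real d / real D"

lemma Dpos: "D > 0" using D2 by simp

lemma zeta0: "zeta 0 = 1" by (simp add: zeta_def)

lemma zetak: "zeta (D div 2) = -1"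
proof -
  have "2 * pi * real (D div 2) / real D = pi" using ev Dpos by (auto elim!: evenE)
  then show ?thesis by (simp add: zeta_def complex_eq_iff)
qed

lemma zeta_pair: "d \<in> {1..D div 2 - 1} \<Longrightarrow> zeta (D - d) = cis (th d) \<and> zeta d = cis (- th d)"
  using zeta_refl[OF Dpos, of d] by (auto simp: zeta_def th_def)

lemma tot2: "1 = p 0 + p (D div 2) + 2 * (\<Sum>d=1..D div 2 - 1. p d)"
proof -
  have "1 = p 0 + p (D div 2) + (\<Sum>d=1..D div 2 - 1. p d + p (D - d))"
    using tot sum_split_even[OF ev D2, of p] by simp
  also have "(\<Sum>d=1..D div 2 - 1. p d + p (D - d)) = (\<Sum>d=1..D div 2 - 1. 2 * p d)"
    by (rule sum.cong) (simp_all add: sym)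
  finally show ?thesis by (simp add: sum_distrib_left)
qed

lemma resA: "(\<Sum>d<D. complex_of_real (p d) * (1 - zeta d))
   = complex_of_real (1 - p 0 + p (D div 2) - 2 * (\<Sum>d = 1..D div 2 - 1. p d * cos (2 * pi * real d / real D)))"
proof -
  have "(\<Sum>d<D. complex_of_real (p d) * (1 - zeta d))
      = complex_of_real (p 0) * (1 - zeta 0) + complex_of_real (p (D div 2)) * (1 - zeta (D div 2))
        + (\<Sum>d=1..D div 2 - 1. complex_of_real (p d) * (1 - zeta d) + complex_of_real (p (D - d)) * (1 - zeta (D - d)))"
    by (rule sum_split_even[OF ev D2])
  also have "(\<Sum>d=1..D div 2 - 1. complex_of_real (p d) * (1 - zeta d) + complex_of_real (p (D - d)) * (1 - zeta (D - d)))
      = (\<Sum>d=1..D div 2 - 1. complex_of_real (p d * (2 - 2 * cos (th d))))"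
  proof (rule sum.cong)
    fix d assume d: "d \<in> {1..D div 2 - 1}"
    have "complex_of_real (p d) * (1 - zeta d) + complex_of_real (p (D - d)) * (1 - zeta (D - d))
        = complex_of_real (p d) * ((1 - cis (- th d)) + (1 - cis (th d)))"
      using zeta_pair[OF d] sym[OF d] by (simp add: algebra_simps)
    also have "\<dots> = complex_of_real (p d * (2 - 2 * cos (th d)))" by (simp add: pairL1)
    finally show "complex_of_real (p d) * (1 - zeta d) + complex_of_real (p (D - d)) * (1 - zeta (D - d))
        = complex_of_real (p d * (2 - 2 * cos (th d)))" .
  qed simp
  finally have "(\<Sum>d<D. complex_of_real (p d) * (1 - zeta d))
      = complex_of_real (2 * p (D div 2) + (\<Sum>d=1..D div 2 - 1. p d * (2 - 2 * cos (th d))))"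
    by (simp add: zeta0 zetak)
  also have "2 * p (D div 2) + (\<Sum>d=1..D div 2 - 1. p d * (2 - 2 * cos (th d)))
      = 1 - p 0 + p (D div 2) - 2 * (\<Sum>d = 1..D div 2 - 1. p d * cos (2 * pi * real d / real D))"
    by (subst tot2) (simp add: th_def algebra_simps sum.distrib sum_subtractf sum_distrib_left)
  finally show ?thesis .
qed

lemma resB: "(\<Sum>d<D. complex_of_real (p d) * (1 - zeta d)^2)
   = complex_of_real (1 - p 0 + 3 * p (D div 2) + 2 * (\<Sum>d = 1..D div 2 - 1. p d * (cos (4 * pi * real d / real D) - 2 * cos (2 * pi * real d / real D))))"
proof -
  have "(\<Sum>d<D. complex_of_real (p d) * (1 - zeta d)^2)
      = complex_of_real (p 0) * (1 - zeta 0)^2 + complex_of_real (p (D div 2)) * (1 - zeta (D div 2))^2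
        + (\<Sum>d=1..D div 2 - 1. complex_of_real (p d) * (1 - zeta d)^2 + complex_of_real (p (D - d)) * (1 - zeta (D - d))^2)"
    by (rule sum_split_even[OF ev D2])
  also have "(\<Sum>d=1..D div 2 - 1. complex_of_real (p d) * (1 - zeta d)^2 + complex_of_real (p (D - d)) * (1 - zeta (D - d))^2)
      = (\<Sum>d=1..D div 2 - 1. complex_of_real (p d * (2 - 4 * cos (th d) + 2 * cos (2 * th d))))"
  proof (rule sum.cong)
    fix d assume d: "d \<in> {1..D div 2 - 1}"
    have "complex_of_real (p d) * (1 - zeta d)^2 + complex_of_real (p (D - d)) * (1 - zeta (D - d))^2
        = complex_of_real (p d) * ((1 - cis (- th d))^2 + (1 - cis (th d))^2)"
      using zeta_pair[OF d] sym[OF d] by (simp add: algebra_simps)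
    also have "\<dots> = complex_of_real (p d * (2 - 4 * cos (th d) + 2 * cos (2 * th d)))" by (simp add: pairL2)
    finally show "complex_of_real (p d) * (1 - zeta d)^2 + complex_of_real (p (D - d)) * (1 - zeta (D - d))^2
        = complex_of_real (p d * (2 - 4 * cos (th d) + 2 * cos (2 * th d)))" .
  qed simp
  finally have "(\<Sum>d<D. complex_of_real (p d) * (1 - zeta d)^2)
      = complex_of_real (4 * p (D div 2) + (\<Sum>d=1..D div 2 - 1. p d * (2 - 4 * cos (th d) + 2 * cos (2 * th d))))"
    by (simp add: zeta0 zetak)
  also have "4 * p (D div 2) + (\<Sum>d=1..D div 2 - 1. p d * (2 - 4 * cos (th d) + 2 * cos (2 * th d)))
      = 1 - p 0 + 3 * p (D div 2) + 2 * (\<Sum>d = 1..D div 2 - 1. p d * (cos (4 * pi * real d / real D) - 2 * cos (2 * pi * real d / real D)))"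
    by (subst tot2) (simp add: th_def algebra_simps sum.distrib sum_subtractf sum_distrib_left)
  finally show ?thesis .
qed

lemma resC: "(\<Sum>d<D. p d * (cmod (1 - zeta d))^2)
   = 4 * p (D div 2) + 4 * (\<Sum>d = 1..D div 2 - 1. p d * (1 - cos (2 * pi * real d / real D)))"
proof -
  have "(\<Sum>d<D. p d * (cmod (1 - zeta d))^2)
      = p 0 * (cmod (1 - zeta 0))^2 + p (D div 2) * (cmod (1 - zeta (D div 2)))^2
        + (\<Sum>d=1..D div 2 - 1. p d * (cmod (1 - zeta d))^2 + p (D - d) * (cmod (1 - zeta (D - d)))^2)"
    by (rule sum_split_even[OF ev D2])
  also have "(\<Sum>d=1..D div 2 - 1. p d * (cmod (1 - zeta d))^2 + p (D - d) * (cmod (1 - zeta (D - d)))^2)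
      = (\<Sum>d=1..D div 2 - 1. p d * (4 - 4 * cos (th d)))"
  proof (rule sum.cong)
    fix d assume d: "d \<in> {1..D div 2 - 1}"
    have "p d * (cmod (1 - zeta d))^2 + p (D - d) * (cmod (1 - zeta (D - d)))^2
        = p d * ((cmod (1 - cis (- th d)))^2 + (cmod (1 - cis (th d)))^2)"
      using zeta_pair[OF d] sym[OF d] by (simp add: algebra_simps)
    also have "\<dots> = p d * (4 - 4 * cos (th d))" by (simp only: pairL3)
    finally show "p d * (cmod (1 - zeta d))^2 + p (D - d) * (cmod (1 - zeta (D - d)))^2 = p d * (4 - 4 * cos (th d))" .
  qed simp
  finally show ?thesis by (simp add: zeta0 zetak th_def algebra_simps sum_distrib_left sum_subtractf)
qed

end


lemma (in prob_space) indep_prod_from: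
  assumes ind: "indep_vars (\<lambda>_. borel) X I" and AB: "A \<inter> B = {}" "A \<subseteq> I" "B \<subseteq> I"
    and Y1: "Y1 \<in> measurable (PiM A (\<lambda>_. borel)) N1" and Y2: "Y2 \<in> measurable (PiM B (\<lambda>_. borel)) N2"
    and S1: "S1 \<in> sets N1" and S2: "S2 \<in> sets N2"
  shows "prob {x \<in> space M. Y1 (restrict (\<lambda>i. X i x) A) \<in> S1 \<and> Y2 (restrict (\<lambda>i. X i x) B) \<in> S2}
    = prob {x \<in> space M. Y1 (restrict (\<lambda>i. X i x) A) \<in> S1} * prob {x \<in> space M. Y2 (restrict (\<lambda>i. X i x) B) \<in> S2}"
proof -
  let ?RA = "\<lambda>x. restrict (\<lambda>i. X i x) A" and ?RB = "\<lambda>x. restrict (\<lambda>i. X i x) B"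
  have T1: "Y1 -` S1 \<inter> space (PiM A (\<lambda>_. borel)) \<in> sets (PiM A (\<lambda>_. borel))" by (rule measurable_sets[OF Y1 S1])
  have T2: "Y2 -` S2 \<inter> space (PiM B (\<lambda>_. borel)) \<in> sets (PiM B (\<lambda>_. borel))" by (rule measurable_sets[OF Y2 S2])
  have "prob ((\<lambda>x. (?RA x, ?RB x)) -` ((Y1 -` S1 \<inter> space (PiM A (\<lambda>_. borel))) \<times> (Y2 -` S2 \<inter> space (PiM B (\<lambda>_. borel)))) \<inter> space M)
     = prob (?RA -` (Y1 -` S1 \<inter> space (PiM A (\<lambda>_. borel))) \<inter> space M) * prob (?RB -` (Y2 -` S2 \<inter> space (PiM B (\<lambda>_. borel))) \<inter> space M)"
    by (rule indep_varD[OF indep_var_restrict[OF ind AB] T1 T2])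
  moreover have "(\<lambda>x. (?RA x, ?RB x)) -` ((Y1 -` S1 \<inter> space (PiM A (\<lambda>_. borel))) \<times> (Y2 -` S2 \<inter> space (PiM B (\<lambda>_. borel)))) \<inter> space M
     = {x \<in> space M. Y1 (?RA x) \<in> S1 \<and> Y2 (?RB x) \<in> S2}"
    by (auto simp: space_PiM)
  moreover have "?RA -` (Y1 -` S1 \<inter> space (PiM A (\<lambda>_. borel))) \<inter> space M = {x \<in> space M. Y1 (?RA x) \<in> S1}"
    by (auto simp: space_PiM)
  moreover have "?RB -` (Y2 -` S2 \<inter> space (PiM B (\<lambda>_. borel))) \<inter> space M = {x \<in> space M. Y2 (?RB x) \<in> S2}"
    by (auto simp: space_PiM)
  ultimately show ?thesis by simp
qed

locale mainloc =
  fixes M :: "'a measure" and D :: nat and P sg2 N0 :: real and g n1 nt st :: "'a \<Rightarrow> complex"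
  assumes M: "prob_space M"
    and D_even: "even D" and D_ge: "D \<ge> 2"
    and g_distr: "distributed M lborel g (\<lambda>z. ennreal (cgauss_density sg2 z))"
    and n1_distr: "distributed M lborel n1 (\<lambda>z. ennreal (cgauss_density N0 z))"
    and nt_distr: "distributed M lborel nt (\<lambda>z. ennreal (cgauss_density N0 z))"
    and st_unif: "\<forall>l<D. measure M {x \<in> space M. st x = psk D l} = 1 / real D"
    and indep: "prob_space.indep_vars M (\<lambda>_. borel) (\<lambda>i. [g, n1, nt, st] ! i) {0..<4}"
begin

sublocale prob_space M by (rule M)

lemma Dpos: "D > 0" using D_ge by simp

lemma rv: "g \<in> borel_measurable M" "n1 \<in> borel_measurable M" "nt \<in> borel_measurable M" "st \<in> borel_measurable M"
proof -
  have "\<forall>i\<in>{0..<4}. (\<lambda>i. [g, n1, nt, st] ! i) i \<in> borel_measurable M"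
    using indep unfolding indep_vars_def by blast
  then show "g \<in> borel_measurable M" "n1 \<in> borel_measurable M" "nt \<in> borel_measurable M" "st \<in> borel_measurable M"
    by (auto dest: bspec[of _ _ 0] bspec[of _ _ 1] bspec[of _ _ 2] bspec[of _ _ 3])
qed

lemmas rv_meas[measurable] = rv

lemma distr_cg:
  assumes "distributed M lborel X (\<lambda>z. ennreal (cgauss_density v z))"
  shows "distr M borel X = cg v"
proof -
  have "distr M lborel X = density lborel (\<lambda>z. ennreal (cgauss_density v z))"
    by (rule distributed_distr_eq_density[OF assms])
  moreover have "distr M borel X = distr M lborel X" by (rule distr_cong) simp_all
  ultimately show ?thesis by (simp add: cg_def)
qed

lemma dg: "distr M borel g = cg sg2" by (rule distr_cg[OF g_distr])
lemma dn1: "distr M borel n1 = cg N0" by (rule distr_cg[OF n1_distr])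
lemma dnt: "distr M borel nt = cg N0" by (rule distr_cg[OF nt_distr])

lemma pcg: "prob_space (cg sg2)" "prob_space (cg N0)"
proof -
  have "prob_space (distr M borel g)" by (rule prob_space_distr[OF rv(1)])
  then show "prob_space (cg sg2)" by (simp only: dg)
  have "prob_space (distr M borel n1)" by (rule prob_space_distr[OF rv(2)])
  then show "prob_space (cg N0)" by (simp only: dn1)
qed

sublocale QD: Q3D sg2 N0 N0 D P
  by (intro Q3D.intro Q3loc.intro Q3D_axioms.intro pcg Dpos)

definition X3 :: "'a \<Rightarrow> complex \<times> complex \<times> complex" where
  "X3 x = (g x, n1 x, nt x)"

lemma X3_meas: "X3 \<in> M \<rightarrow>\<^sub>M (borel \<Otimes>\<^sub>M (borel \<Otimes>\<^sub>M borel))"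
  unfolding X3_def by measurable

lemma I1:
  assumes S: "S \<in> sets borel" and B: "B \<in> sets (borel \<Otimes>\<^sub>M (borel \<Otimes>\<^sub>M borel))"
  shows "prob {x \<in> space M. st x \<in> S \<and> X3 x \<in> B} = prob {x \<in> space M. st x \<in> S} * prob {x \<in> space M. X3 x \<in> B}"
proof -
  have m1: "(\<lambda>f. f 3) \<in> measurable (PiM {3} (\<lambda>_. borel)) (borel :: complex measure)"
    by (rule measurable_component_singleton) simp
  have m2: "(\<lambda>f. (f 0, f 1, f 2)) \<in> measurable (PiM {0,1,2::nat} (\<lambda>_. borel)) (borel \<Otimes>\<^sub>M (borel \<Otimes>\<^sub>M (borel :: complex measure)))"
    by measurable
  have "prob {x \<in> space M. (\<lambda>f. f 3) (restrict (\<lambda>i. ([g, n1, nt, st] ! i) x) {3}) \<in> S \<and> (\<lambda>f. (f 0, f 1, f 2)) (restrict (\<lambda>i. ([g, n1, nt, st] ! i) x) {0,1,2}) \<in> B}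
    = prob {x \<in> space M. (\<lambda>f. f 3) (restrict (\<lambda>i. ([g, n1, nt, st] ! i) x) {3}) \<in> S} * prob {x \<in> space M. (\<lambda>f. (f 0, f 1, f 2)) (restrict (\<lambda>i. ([g, n1, nt, st] ! i) x) {0,1,2}) \<in> B}"
    by (rule indep_prod_from[OF indep _ _ _ m1 m2 S B]) auto
  then show ?thesis by (simp add: X3_def)
qed

lemma I2:
  assumes S: "S \<in> sets borel" and B: "B \<in> sets (borel \<Otimes>\<^sub>M borel)"
  shows "prob {x \<in> space M. g x \<in> S \<and> (n1 x, nt x) \<in> B} = prob {x \<in> space M. g x \<in> S} * prob {x \<in> space M. (n1 x, nt x) \<in> B}"
proof -
  have m1: "(\<lambda>f. f 0) \<in> measurable (PiM {0} (\<lambda>_. borel)) (borel :: complex measure)"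
    by (rule measurable_component_singleton) simp
  have m2: "(\<lambda>f. (f 1, f 2)) \<in> measurable (PiM {1,2::nat} (\<lambda>_. borel)) (borel \<Otimes>\<^sub>M (borel :: complex measure))"
    by measurable
  have "prob {x \<in> space M. (\<lambda>f. f 0) (restrict (\<lambda>i. ([g, n1, nt, st] ! i) x) {0}) \<in> S \<and> (\<lambda>f. (f 1, f 2)) (restrict (\<lambda>i. ([g, n1, nt, st] ! i) x) {1,2}) \<in> B}
    = prob {x \<in> space M. (\<lambda>f. f 0) (restrict (\<lambda>i. ([g, n1, nt, st] ! i) x) {0}) \<in> S} * prob {x \<in> space M. (\<lambda>f. (f 1, f 2)) (restrict (\<lambda>i. ([g, n1, nt, st] ! i) x) {1,2}) \<in> B}"
    by (rule indep_prod_from[OF indep _ _ _ m1 m2 S B]) auto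
  then show ?thesis by simp
qed

lemma I3: "indep_var borel n1 borel nt"
proof -
  have m1: "(\<lambda>f. f 1) \<in> measurable (PiM {1} (\<lambda>_. borel)) (borel :: complex measure)"
    by (rule measurable_component_singleton) simp
  have m2: "(\<lambda>f. f 2) \<in> measurable (PiM {2::nat} (\<lambda>_. borel)) (borel :: complex measure)"
    by (rule measurable_component_singleton) simp
  have "indep_var borel (\<lambda>x. (\<lambda>f. f 1) (restrict (\<lambda>i. ([g, n1, nt, st] ! i) x) {1}))
     borel (\<lambda>x. (\<lambda>f. f 2) (restrict (\<lambda>i. ([g, n1, nt, st] ! i) x) {2}))"
    using indep_var_compose[OF indep_var_restrict[OF indep, of "{1}" "{2}"] m1 m2] by (simp add: comp_def)
  moreover have "(\<lambda>x. (\<lambda>f. f 1) (restrict (\<lambda>i. ([g, n1, nt, st] ! i) x) {1})) = n1" by (simp add: fun_eq_iff)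
  moreover have "(\<lambda>x. (\<lambda>f. f 2) (restrict (\<lambda>i. ([g, n1, nt, st] ! i) x) {2})) = nt" by (simp add: fun_eq_iff)
  ultimately show ?thesis by simp
qed

lemma law23: "distr M (borel \<Otimes>\<^sub>M borel) (\<lambda>x. (n1 x, nt x)) = cg N0 \<Otimes>\<^sub>M cg N0"
proof -
  have "distr M borel n1 \<Otimes>\<^sub>M distr M borel nt = distr M (borel \<Otimes>\<^sub>M borel) (\<lambda>x. (n1 x, nt x))"
    using I3 by (simp add: indep_var_distribution_eq)
  then show ?thesis by (simp add: dn1 dnt)
qed

lemma law_X3': "QD.Q3 = distr M (borel \<Otimes>\<^sub>M (borel \<Otimes>\<^sub>M borel)) X3"
  unfolding QD.Q3_def
proof (rule pair_measure_eqI)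
  interpret P1: prob_space "cg sg2" by (rule pcg)
  interpret P23: prob_space "cg N0 \<Otimes>\<^sub>M cg N0" by (intro prob_space_pair pcg)
  show "sigma_finite_measure (cg sg2)" ..
  show "sigma_finite_measure (cg N0 \<Otimes>\<^sub>M cg N0)" ..
  show "sets (cg sg2 \<Otimes>\<^sub>M (cg N0 \<Otimes>\<^sub>M cg N0)) = sets (distr M (borel \<Otimes>\<^sub>M (borel \<Otimes>\<^sub>M borel)) X3)"
    using QD.sets_Q3 unfolding QD.Q3_def by simp
  fix A B assume A: "A \<in> sets (cg sg2)" and B: "B \<in> sets (cg N0 \<Otimes>\<^sub>M cg N0)"
  have A': "A \<in> sets borel" using A by simp
  have "sets (cg N0 \<Otimes>\<^sub>M cg N0) = sets (borel \<Otimes>\<^sub>M (borel :: complex measure))"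
    by (rule sets_pair_measure_cong) simp_all
  with B have B': "B \<in> sets (borel \<Otimes>\<^sub>M borel)" by simp
  have m23: "(\<lambda>x. (n1 x, nt x)) \<in> M \<rightarrow>\<^sub>M (borel \<Otimes>\<^sub>M borel)" by measurable
  have "emeasure (cg sg2) A = emeasure M (g -` A \<inter> space M)"
    using emeasure_distr[OF rv(1) A'] by (simp add: dg)
  moreover have "emeasure (cg N0 \<Otimes>\<^sub>M cg N0) B = emeasure M ((\<lambda>x. (n1 x, nt x)) -` B \<inter> space M)"
    using emeasure_distr[OF m23 B'] by (simp add: law23)
  moreover have "emeasure (distr M (borel \<Otimes>\<^sub>M (borel \<Otimes>\<^sub>M borel)) X3) (A \<times> B) = emeasure M (X3 -` (A \<times> B) \<inter> space M)"
    using A' B' by (intro emeasure_distr X3_meas) auto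
  moreover have "prob (X3 -` (A \<times> B) \<inter> space M) = prob (g -` A \<inter> space M) * prob ((\<lambda>x. (n1 x, nt x)) -` B \<inter> space M)"
  proof -
    have "X3 -` (A \<times> B) \<inter> space M = {x \<in> space M. g x \<in> A \<and> (n1 x, nt x) \<in> B}" by (auto simp: X3_def)
    moreover have "g -` A \<inter> space M = {x \<in> space M. g x \<in> A}" by auto
    moreover have "(\<lambda>x. (n1 x, nt x)) -` B \<inter> space M = {x \<in> space M. (n1 x, nt x) \<in> B}" by auto
    ultimately show ?thesis using I2[OF A' B'] by simp
  qed
  ultimately show "emeasure (cg sg2) A * emeasure (cg N0 \<Otimes>\<^sub>M cg N0) B = emeasure (distr M (borel \<Otimes>\<^sub>M (borel \<Otimes>\<^sub>M borel)) X3) (A \<times> B)"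
    by (simp add: emeasure_eq_measure ennreal_mult)
qed

lemma law_X3: "distr M (borel \<Otimes>\<^sub>M (borel \<Otimes>\<^sub>M borel)) X3 = QD.Q3"
  using law_X3' by simp

end

context mainloc
begin

definition E :: "'a \<Rightarrow> complex" where
  "E x = psk_detect D (equalized P (g x) (st x) (n1 x) (nt x))"

lemma E_meas[measurable]: "E \<in> borel_measurable M"
  unfolding E_def equalized_def by measurable

lemma PE:
  assumes l: "l < D"
  shows "prob {x \<in> space M. st x = psk D l \<and> E x = w} = (1 / real D) * QD.Qw (cnj (cis (2 * pi * real l / real D)) * w)"
proof -
  define B where "B = {t. psk_detect D (QD.eqs (psk D l) t) = w}"
  have B: "B \<in> sets (borel \<Otimes>\<^sub>M (borel \<Otimes>\<^sub>M borel))"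
    using QD.det_eqs_sets[of "psk D l" w] QD.sets_Q3 by (simp add: B_def)
  have set: "{x \<in> space M. st x = psk D l \<and> E x = w} = {x \<in> space M. st x \<in> {psk D l} \<and> X3 x \<in> B}"
    by (auto simp: E_def X3_def QD.eqs_def B_def)
  have "prob {x \<in> space M. st x \<in> {psk D l} \<and> X3 x \<in> B} = prob {x \<in> space M. st x \<in> {psk D l}} * prob {x \<in> space M. X3 x \<in> B}"
    by (rule I1[OF _ B]) simp
  moreover have "prob {x \<in> space M. st x \<in> {psk D l}} = 1 / real D"
    using st_unif l by simp
  moreover have "prob {x \<in> space M. X3 x \<in> B} = QD.Qw (cnj (cis (2 * pi * real l / real D)) * w)"
  proof -
    have "prob {x \<in> space M. X3 x \<in> B} = measure (distr M (borel \<Otimes>\<^sub>M (borel \<Otimes>\<^sub>M borel)) X3) B"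
      by (subst measure_distr[OF X3_meas B]) (auto intro!: arg_cong[where f=prob])
    also have "\<dots> = measure QD.Q3 B" by (simp add: law_X3)
    also have "\<dots> = QD.Qw (cnj (cis (2 * pi * real l / real D)) * w)"
      unfolding B_def by (rule QD.K1)
    finally show ?thesis .
  qed
  ultimately show ?thesis by (simp add: set)
qed

lemma p_eq:
  "cond_prob M (\<lambda>x. psk_detect D (equalized P (g x) (st x) (n1 x) (nt x)) = psk D d) (\<lambda>x. st x = psk D 0)
   = QD.Qw (psk D d)"
proof -
  have num: "prob {x \<in> space M. psk_detect D (equalized P (g x) (st x) (n1 x) (nt x)) = psk D d \<and> st x = psk D 0}
     = (1 / real D) * QD.Qw (psk D d)"
  proof -
    have "{x \<in> space M. psk_detect D (equalized P (g x) (st x) (n1 x) (nt x)) = psk D d \<and> st x = psk D 0}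
        = {x \<in> space M. st x = psk D 0 \<and> E x = psk D d}" by (auto simp: E_def)
    then show ?thesis using PE[OF Dpos, of "psk D d"] by simp
  qed
  have den: "prob {x \<in> space M. st x = psk D 0} = 1 / real D" using st_unif Dpos by simp
  show ?thesis unfolding cond_prob_def using num den Dpos by simp
qed

lemma AE_st: "AE x in M. st x \<in> psk D ` {..<D}"
proof -
  have st_m: "st \<in> M \<rightarrow>\<^sub>M borel" by (rule rv(4))
  interpret N: prob_space "distr M borel st" by (rule prob_space_distr[OF st_m])
  have fin: "finite (psk D ` {..<D})" by simp
  have clo: "psk D ` {..<D} \<in> sets borel" by (intro borel_closed finite_imp_closed fin)
  have "prob (st -` (psk D ` {..<D}) \<inter> space M) = measure (distr M borel st) (psk D ` {..<D})"
    by (rule measure_distr[OF st_m clo, symmetric])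
  also have "\<dots> = (\<Sum>v\<in>psk D ` {..<D}. measure (distr M borel st) {v})"
    by (rule measure_eq_sum_singleton) (simp_all add: N.emeasure_finite)
  also have "\<dots> = (\<Sum>l<D. measure (distr M borel st) {psk D l})"
    by (rule sum.reindex_cong[where l="psk D"]) (use psk_inj[OF Dpos] in \<open>auto simp: atLeast0LessThan\<close>)
  also have "\<dots> = (\<Sum>l<D. 1 / real D)"
  proof (rule sum.cong)
    fix l assume "l \<in> {..<D}"
    then have "measure (distr M borel st) {psk D l} = measure M (st -` {psk D l} \<inter> space M)"
      by (intro measure_distr[OF st_m]) simp
    also have "st -` {psk D l} \<inter> space M = {x \<in> space M. st x = psk D l}" by auto
    finally show "measure (distr M borel st) {psk D l} = 1 / real D" using st_unif \<open>l \<in> {..<D}\<close> by simp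
  qed simp
  also have "\<dots> = 1" using Dpos by simp
  finally have "prob (st -` (psk D ` {..<D}) \<inter> space M) = 1" .
  then have "AE x in M. x \<in> st -` (psk D ` {..<D}) \<inter> space M" by (rule AE_prob_1)
  then show ?thesis by eventually_elim auto
qed

lemma psk0_cnj: "psk D 0 * cnj (psk D d) = cis (- (2 * pi * real d / real D))"
proof -
  have "pi * (2 * real (0::nat) + 1) / real D + - (pi * (2 * real d + 1) / real D) = - (2 * pi * real d / real D)"
    using Dpos by (simp add: field_simps)
  then show ?thesis by (simp add: psk_cis cis_cnj cis_mult)
qed

lemma integral_f:
  fixes f :: "complex \<Rightarrow> 'b::{banach, second_countable_topology}"
  assumes f[measurable]: "f \<in> borel_measurable borel"
  shows "integral\<^sup>L M (\<lambda>x. f (st x * cnj (E x))) = (\<Sum>d<D. QD.Qw (psk D d) *\<^sub>R f (cis (- (2 * pi * real d / real D))))"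
proof -
  define PS where "PS = psk_set D"
  define A where "A = (\<lambda>l w. {x \<in> space M. st x = psk D l \<and> E x = w})"
  have As[measurable]: "A l w \<in> sets M" for l w unfolding A_def by measurable
  have finPS: "finite PS" by (simp add: PS_def)
  define G where "G = (\<lambda>x. \<Sum>l<D. \<Sum>w\<in>PS. indicator (A l w) x *\<^sub>R f (psk D l * cnj w))"
  have Gm: "G \<in> borel_measurable M" unfolding G_def by measurable
  have "AE x in M. f (st x * cnj (E x)) = G x"
    using AE_st AE_space
  proof eventually_elim
    case (elim x)
    from elim(1) obtain l0 where l0: "l0 < D" "st x = psk D l0" by auto
    have EPS: "E x \<in> PS" unfolding PS_def E_def by (rule det_mem[OF Dpos])
    have inner: "(\<Sum>w\<in>PS. indicator (A l w) x *\<^sub>R f (psk D l * cnj w)) = (if l = l0 then f (psk D l * cnj (E x)) else 0)"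
      if l: "l < D" for l
    proof -
      have eqv: "st x = psk D l \<longleftrightarrow> l = l0"
        using psk_inj[OF Dpos] l l0 by (auto simp: inj_on_def)
      have "(\<Sum>w\<in>PS. indicator (A l w) x *\<^sub>R f (psk D l * cnj w))
          = (\<Sum>w\<in>PS. if w = E x then (if l = l0 then f (psk D l * cnj w) else 0) else 0)"
        by (rule sum.cong[OF refl]) (auto simp: indicator_def A_def elim(2) eqv)
      also have "\<dots> = (if l = l0 then f (psk D l * cnj (E x)) else 0)"
        using EPS finPS by (simp add: sum.delta')
      finally show ?thesis .
    qed
    have "G x = (\<Sum>l<D. if l = l0 then f (psk D l * cnj (E x)) else 0)"
      unfolding G_def by (rule sum.cong[OF refl]) (simp add: inner)
    also have "\<dots> = f (psk D l0 * cnj (E x))" using l0(1) by simp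
    finally show ?case using l0(2) by simp
  qed
  then have "integral\<^sup>L M (\<lambda>x. f (st x * cnj (E x))) = integral\<^sup>L M G"
    by (intro integral_cong_AE) (simp_all add: Gm)
  also have "\<dots> = (\<Sum>l<D. \<Sum>w\<in>PS. measure M (A l w) *\<^sub>R f (psk D l * cnj w))"
  proof -
    have int: "integrable M (\<lambda>x. indicator (A l w) x *\<^sub>R f (psk D l * cnj w))" for l w
      by (intro integrable_scaleR_left integrable_real_indicator) (auto simp: less_top[symmetric])
    have intI: "integrable M (indicator (A l w) :: 'a \<Rightarrow> real)" for l w
      by (intro integrable_real_indicator) (auto simp: less_top[symmetric])
    have "integral\<^sup>L M G = (\<Sum>l<D. integral\<^sup>L M (\<lambda>x. \<Sum>w\<in>PS. indicator (A l w) x *\<^sub>R f (psk D l * cnj w)))"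
      unfolding G_def
      by (rule Bochner_Integration.integral_sum[where f="\<lambda>l x. \<Sum>w\<in>PS. indicator (A l w) x *\<^sub>R f (psk D l * cnj w)"])
         (intro Bochner_Integration.integrable_sum int)
    also have "\<dots> = (\<Sum>l<D. \<Sum>w\<in>PS. integral\<^sup>L M (\<lambda>x. indicator (A l w) x *\<^sub>R f (psk D l * cnj w)))"
      by (rule sum.cong[OF refl], rule Bochner_Integration.integral_sum[where f="\<lambda>w x. indicator (A l w) x *\<^sub>R f (psk D l * cnj w)" for l], rule int)
    also have "\<dots> = (\<Sum>l<D. \<Sum>w\<in>PS. measure M (A l w) *\<^sub>R f (psk D l * cnj w))"
    proof (rule sum.cong[OF refl], rule sum.cong[OF refl])
      fix l w
      have "integral\<^sup>L M (\<lambda>x. indicator (A l w) x *\<^sub>R f (psk D l * cnj w)) = integral\<^sup>L M (indicator (A l w)) *\<^sub>R f (psk D l * cnj w)"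
        by (rule integral_scaleR_left) (rule intI)
      also have "integral\<^sup>L M (indicator (A l w)) = measure M (A l w)"
        using sets.sets_into_space[OF As[of l w]] by (simp add: Int_absorb2)
      finally show "integral\<^sup>L M (\<lambda>x. indicator (A l w) x *\<^sub>R f (psk D l * cnj w)) = measure M (A l w) *\<^sub>R f (psk D l * cnj w)" .
    qed
    finally show ?thesis .
  qed
  also have "\<dots> = (\<Sum>l<D. \<Sum>w\<in>PS. ((1 / real D) * QD.Qw w) *\<^sub>R f (psk D 0 * cnj w))"
  proof (rule sum.cong[OF refl])
    fix l assume l: "l \<in> {..<D}"
    define u where "u = cis (2 * pi * real l / real D)"
    have u1: "cnj u * u = 1" by (simp add: u_def cis_cnj cis_mult)
    have pl: "psk D l = u * psk D 0" using psk_rot[OF Dpos, of l 0] by (simp add: u_def)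
    have img: "(\<lambda>z. u * z) ` PS = PS" unfolding PS_def u_def by (rule psk_set_rot[OF Dpos])
    have inj: "inj_on (\<lambda>z. u * z) PS" using u1 by (intro inj_onI) (metis mult_cancel_left mult_zero_right zero_neq_one)
    have "(\<Sum>w\<in>PS. measure M (A l w) *\<^sub>R f (psk D l * cnj w))
        = (\<Sum>w\<in>PS. ((1 / real D) * QD.Qw (cnj u * w)) *\<^sub>R f (psk D l * cnj w))"
      using PE l by (simp add: A_def u_def)
    also have "\<dots> = (\<Sum>w\<in>(\<lambda>z. u * z) ` PS. ((1 / real D) * QD.Qw (cnj u * w)) *\<^sub>R f (psk D l * cnj w))"
      by (simp only: img)
    also have "\<dots> = (\<Sum>w\<in>PS. ((1 / real D) * QD.Qw (cnj u * (u * w))) *\<^sub>R f (psk D l * cnj (u * w)))"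
      by (simp add: sum.reindex[OF inj])
    also have "\<dots> = (\<Sum>w\<in>PS. ((1 / real D) * QD.Qw w) *\<^sub>R f (psk D 0 * cnj w))"
    proof (rule sum.cong[OF refl])
      fix w
      have e1: "cnj u * (u * w) = w" by (simp add: mult.assoc[symmetric] u1)
      have e2: "psk D l * cnj (u * w) = psk D 0 * cnj w"
      proof -
        have u1': "u * cnj u = 1" using u1 by (simp add: mult.commute)
        show ?thesis by (simp add: pl u1')
      qed
      show "((1 / real D) * QD.Qw (cnj u * (u * w))) *\<^sub>R f (psk D l * cnj (u * w)) = ((1 / real D) * QD.Qw w) *\<^sub>R f (psk D 0 * cnj w)"
        by (simp only: e1 e2)
    qed
    finally show "(\<Sum>w\<in>PS. measure M (A l w) *\<^sub>R f (psk D l * cnj w)) = (\<Sum>w\<in>PS. ((1 / real D) * QD.Qw w) *\<^sub>R f (psk D 0 * cnj w))" .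
  qed
  also have "\<dots> = (\<Sum>w\<in>PS. QD.Qw w *\<^sub>R f (psk D 0 * cnj w))"
  proof -
    have "(\<Sum>w\<in>PS. ((1 / real D) * QD.Qw w) *\<^sub>R f (psk D 0 * cnj w)) = (1 / real D) *\<^sub>R (\<Sum>w\<in>PS. QD.Qw w *\<^sub>R f (psk D 0 * cnj w))"
      by (simp add: scaleR_sum_right)
    then have "(\<Sum>l<D. \<Sum>w\<in>PS. ((1 / real D) * QD.Qw w) *\<^sub>R f (psk D 0 * cnj w)) = real D *\<^sub>R ((1 / real D) *\<^sub>R (\<Sum>w\<in>PS. QD.Qw w *\<^sub>R f (psk D 0 * cnj w)))"
      by (simp only: sum_constant_scaleR card_lessThan)
    also have "\<dots> = (\<Sum>w\<in>PS. QD.Qw w *\<^sub>R f (psk D 0 * cnj w))" using Dpos by simp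
    finally show ?thesis .
  qed
  also have "\<dots> = (\<Sum>d<D. QD.Qw (psk D d) *\<^sub>R f (psk D 0 * cnj (psk D d)))"
    unfolding PS_def psk_set_def using psk_inj[OF Dpos] by (simp add: sum.reindex atLeast0LessThan)
  also have "\<dots> = (\<Sum>d<D. QD.Qw (psk D d) *\<^sub>R f (cis (- (2 * pi * real d / real D))))"
    by (simp add: psk0_cnj)
  finally show ?thesis .
qed

lemma main:
  defines "p \<equiv> (\<lambda>d. cond_prob M (\<lambda>x. psk_detect D (equalized P (g x) (st x) (n1 x) (nt x)) = psk D d)
                              (\<lambda>x. st x = psk D 0))"
    and "xi \<equiv> (\<lambda>x. 1 - st x * cnj (psk_detect D (equalized P (g x) (st x) (n1 x) (nt x))))"
  shows "(integral\<^sup>L M xi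
           = complex_of_real (1 - p 0 + p (D div 2)
               - 2 * (\<Sum>d = 1..D div 2 - 1. p d * cos (2 * pi * real d / real D))))
         \<and> (integral\<^sup>L M (\<lambda>x. (xi x)^2)
           = complex_of_real (1 - p 0 + 3 * p (D div 2)
               + 2 * (\<Sum>d = 1..D div 2 - 1. p d * (cos (4 * pi * real d / real D)
                                                - 2 * cos (2 * pi * real d / real D)))))
         \<and> (integral\<^sup>L M (\<lambda>x. (cmod (xi x))^2)
           = 4 * p (D div 2)
               + 4 * (\<Sum>d = 1..D div 2 - 1. p d * (1 - cos (2 * pi * real d / real D))))"
proof -
  have pq: "p d = QD.Qw (psk D d)" for d unfolding p_def by (rule p_eq)
  have sym: "p (D - d) = p d" if d: "d \<in> {1..D div 2 - 1}" for d
  proof -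
    have "d \<le> D" using d by auto
    then have "psk D (D - d) = refl_psk D (psk D d)" by (simp add: refl_psk_psk[OF Dpos])
    then show ?thesis by (simp add: pq QD.K2)
  qed
  have tot: "(\<Sum>d<D. p d) = 1"
  proof -
    have "(\<Sum>d<D. p d) = (\<Sum>d<D. QD.Qw (psk D d))" by (simp add: pq)
    also have "\<dots> = (\<Sum>w\<in>psk_set D. QD.Qw w)"
      unfolding psk_set_def using psk_inj[OF Dpos] by (simp add: sum.reindex atLeast0LessThan)
    also have "\<dots> = 1" by (rule QD.K3)
    finally show ?thesis .
  qed
  interpret FA: final_alg D p using D_even D_ge sym tot by unfold_locales auto
  have gen: "integral\<^sup>L M (\<lambda>x. h (st x * cnj (E x))) = (\<Sum>d<D. p d *\<^sub>R h (FA.zeta d))"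
    if h: "h \<in> borel_measurable borel" for h :: "complex \<Rightarrow> 'c::{banach, second_countable_topology}"
    using integral_f[OF h] by (simp add: pq FA.zeta_def)
  have xiE: "xi = (\<lambda>x. 1 - st x * cnj (E x))" by (simp add: xi_def E_def fun_eq_iff)
  have r1: "integral\<^sup>L M xi = (\<Sum>d<D. complex_of_real (p d) * (1 - FA.zeta d))"
    using gen[of "\<lambda>z. 1 - z"] by (simp add: xiE scaleR_conv_of_real)
  have r2: "integral\<^sup>L M (\<lambda>x. (xi x)^2) = (\<Sum>d<D. complex_of_real (p d) * (1 - FA.zeta d)^2)"
    using gen[of "\<lambda>z. (1 - z)^2"] by (simp add: xiE scaleR_conv_of_real)
  have r3: "integral\<^sup>L M (\<lambda>x. (cmod (xi x))^2) = (\<Sum>d<D. p d * (cmod (1 - FA.zeta d))^2)"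
    using gen[of "\<lambda>z. (cmod (1 - z))^2"] by (simp add: xiE)
  show ?thesis using r1 r2 r3 FA.resA FA.resB FA.resC by simp
qed

end

theorem lemma1:
  fixes M :: "'a measure"
    and D :: nat
    and P sg2 N0 :: real
    and g n1 nt st :: "'a \<Rightarrow> complex"
  assumes M: "prob_space M"
    and D_even: "even D" and D_ge: "D \<ge> 2"
    and P_pos: "P > 0" and sg2_pos: "sg2 > 0" and N0_pos: "N0 > 0"
    and g_distr: "distributed M lborel g (\<lambda>z. ennreal (cgauss_density sg2 z))"
    and n1_distr: "distributed M lborel n1 (\<lambda>z. ennreal (cgauss_density N0 z))"
    and nt_distr: "distributed M lborel nt (\<lambda>z. ennreal (cgauss_density N0 z))"
    and st_unif: "\<forall>l<D. measure M {x \<in> space M. st x = psk D l} = 1 / real D"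
    and indep: "prob_space.indep_vars M (\<lambda>_. borel) (\<lambda>i. [g, n1, nt, st] ! i) {0..<4}"
  defines "p \<equiv> (\<lambda>d. cond_prob M (\<lambda>x. psk_detect D (equalized P (g x) (st x) (n1 x) (nt x)) = psk D d)
                              (\<lambda>x. st x = psk D 0))"
    and "xi \<equiv> (\<lambda>x. 1 - st x * cnj (psk_detect D (equalized P (g x) (st x) (n1 x) (nt x))))"
  shows "(integral\<^sup>L M xi
           = complex_of_real (1 - p 0 + p (D div 2)
               - 2 * (\<Sum>d = 1..D div 2 - 1. p d * cos (2 * pi * real d / real D))))
         \<and> (integral\<^sup>L M (\<lambda>x. (xi x)^2)
           = complex_of_real (1 - p 0 + 3 * p (D div 2)
               + 2 * (\<Sum>d = 1..D div 2 - 1. p d * (cos (4 * pi * real d / real D)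
                                                - 2 * cos (2 * pi * real d / real D)))))
         \<and> (integral\<^sup>L M (\<lambda>x. (cmod (xi x))^2)
           = 4 * p (D div 2)
               + 4 * (\<Sum>d = 1..D div 2 - 1. p d * (1 - cos (2 * pi * real d / real D))))"
proof -
  interpret mainloc M D P sg2 N0 g n1 nt st
    by (rule mainloc.intro) (rule M D_even D_ge g_distr n1_distr nt_distr st_unif indep)+
  show ?thesis unfolding p_def xi_def by (rule main)
qed


end
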